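(* Let $s\ge 1$ and let $f,g\in\mathbb{K}[y]$ be polynomials of degree $s$ with nonzero constant terms. Then $A_f\cong A_g$ as $\mathbb{K}$-algebras if and only if there exist $\lambda,c\in\mathbb{K}^*$ such that either $g(y)=\lambda f(cy)$ or $g(y)=\lambda\, y^{s} f(c\,y^{-1})$.
   Context: $\mathbb{K}$ is an algebraically closed field of characteristic $0$. For a polynomial $h\in\mathbb{K}[y]$ with nonzero constant term, $A_h:=\mathbb{K}[x_1,x_2,y^{\pm1}]/(x_1x_2-h(y))$. (For the shearing polyptych lattice $\mathcal M_s$, the detropicalized algebras are exactly the algebras $A_h$ with $\deg h=s$.) *)

theory Defs
  imports "HOL-Computational_Algebra.Polynomial" "HOL-Algebra.QuotRing"
begin

definition alg_closed_field :: "'a::field itself \<Rightarrow> bool" where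
  "alg_closed_field _ \<longleftrightarrow> (\<forall>p::'a poly. degree p \<ge> 1 \<longrightarrow> (\<exists>x. poly p x = 0))"

text \<open>The polynomial ring K[x1,x2,y,z] as iterated univariate polynomials:
  outermost variable x1, then x2, then z, innermost y.\<close>
type_synonym 'a mpoly4 = "'a poly poly poly poly"

definition tc_ring :: "('a::comm_ring_1) ring" where
  "tc_ring = \<lparr>carrier = UNIV, monoid.mult = (*), one = 1, zero = 0, add = (+)\<rparr>"

definition X1 :: "'a::comm_ring_1 mpoly4" where "X1 = [:0, 1:]"
definition X2 :: "'a::comm_ring_1 mpoly4" where "X2 = [:[:0, 1:]:]"
definition Zv :: "'a::comm_ring_1 mpoly4" where "Zv = [:[:[:0, 1:]:]:]"
definition Yv :: "'a::comm_ring_1 mpoly4" where "Yv = [:[:[:[:0, 1:]:]:]:]"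
definition const4 :: "'a::comm_ring_1 \<Rightarrow> 'a mpoly4" where "const4 c = [:[:[:[:c:]:]:]:]"
definition hY :: "'a::comm_ring_1 poly \<Rightarrow> 'a mpoly4" where "hY h = [:[:[:h:]:]:]"

text \<open>A_h = K[x1,x2,y^{\<pm>1}]/(x1 x2 - h(y)) = K[x1,x2,y,z]/(x1 x2 - h(y), y z - 1).\<close>
definition A_ideal :: "'a::comm_ring_1 poly \<Rightarrow> 'a mpoly4 set" where
  "A_ideal h = genideal tc_ring {X1 * X2 - hY h, Yv * Zv - 1}"

definition A_alg :: "'a::comm_ring_1 poly \<Rightarrow> 'a mpoly4 set ring" where
  "A_alg h = tc_ring Quot (A_ideal h)"

definition A_kalg_iso :: "'a::comm_ring_1 poly \<Rightarrow> 'a poly \<Rightarrow> bool" where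
  "A_kalg_iso f g \<longleftrightarrow> (\<exists>\<phi>. \<phi> \<in> ring_iso (A_alg f) (A_alg g) \<and>
     (\<forall>c. \<phi> (A_ideal f +>\<^bsub>tc_ring\<^esub> const4 c) = A_ideal g +>\<^bsub>tc_ring\<^esub> const4 c))"

end

theory Submission
  imports Defs
begin


lemma tc_simps [simp]: "carrier tc_ring = UNIV" "mult tc_ring = (*)" "one tc_ring = 1"
  "zero tc_ring = 0" "add tc_ring = (+)"
  by (simp_all add: tc_ring_def)

lemma tc_cring: "cring (tc_ring :: 'a::comm_ring_1 ring)"
proof (rule cringI)
  show "abelian_group (tc_ring :: 'a ring)"
    by (rule abelian_groupI) (auto simp: algebra_simps intro: exI[of _ "- _"])
  show "Group.comm_monoid (tc_ring :: 'a ring)"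
    by (rule comm_monoidI) (auto simp: algebra_simps)
qed (auto simp: algebra_simps)

lemma tc_ring: "ring (tc_ring :: 'a::comm_ring_1 ring)"
  using tc_cring cring.axioms(1) by blast

lemma tc_a_inv [simp]: "a_inv tc_ring (x::'a::comm_ring_1) = - x"
proof -
  interpret cring "tc_ring :: 'a ring" by (rule tc_cring)
  show ?thesis by (rule minus_equality) auto
qed

lemma tc_a_minus [simp]: "a_minus tc_ring (x::'a::comm_ring_1) y = x - y"
  by (simp add: a_minus_def)

lemma tc_pow [simp]: "pow tc_ring (x::'a::comm_ring_1) (n::nat) = x ^ n"
  by (induct n) (auto simp: tc_ring_def)

definition Jset :: "'a::comm_ring_1 poly \<Rightarrow> 'a mpoly4 set" where
  "Jset h = {P. \<exists>U V. P = U * (X1 * X2 - hY h) + V * (Yv * Zv - 1)}"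

lemma Jset_ideal: "ideal (Jset h) tc_ring"
proof -
  interpret cring "tc_ring :: 'a mpoly4 ring" by (rule tc_cring)
  show ?thesis
  proof (rule idealI)
    show "ring (tc_ring :: 'a mpoly4 ring)" by (rule tc_ring)
    show "subgroup (Jset h) (add_monoid tc_ring)"
    proof (rule subgroup.intro)
      show "Jset h \<subseteq> carrier (add_monoid tc_ring)" by simp
      show "\<one>\<^bsub>add_monoid tc_ring\<^esub> \<in> Jset h" unfolding Jset_def by (auto intro!: exI[of _ 0])
    next
      fix a b assume "a \<in> Jset h" "b \<in> Jset h"
      then obtain U V U' V' where ab: "a = U * (X1 * X2 - hY h) + V * (Yv * Zv - 1)"
        "b = U' * (X1 * X2 - hY h) + V' * (Yv * Zv - 1)" unfolding Jset_def by blast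
      show "a \<otimes>\<^bsub>add_monoid tc_ring\<^esub> b \<in> Jset h"
        unfolding Jset_def ab by (rule CollectI, rule exI[of _ "U+U'"], rule exI[of _ "V+V'"]) (simp add: algebra_simps)
    next
      fix a assume "a \<in> Jset h"
      then obtain U V where ab: "a = U * (X1 * X2 - hY h) + V * (Yv * Zv - 1)" unfolding Jset_def by blast
      show "inv\<^bsub>add_monoid tc_ring\<^esub> a \<in> Jset h"
        unfolding Jset_def a_inv_def[symmetric] tc_a_inv ab
        by (rule CollectI, rule exI[of _ "-U"], rule exI[of _ "-V"]) (simp add: algebra_simps)
    qed
  next
    fix a x assume "a \<in> Jset h"
    then obtain U V where ab: "a = U * (X1 * X2 - hY h) + V * (Yv * Zv - 1)" unfolding Jset_def by blast
    show "x \<otimes>\<^bsub>tc_ring\<^esub> a \<in> Jset h" "a \<otimes>\<^bsub>tc_ring\<^esub> x \<in> Jset h"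
      unfolding Jset_def ab
      by (rule CollectI, rule exI[of _ "x*U"], rule exI[of _ "x*V"], simp add: algebra_simps)+
  qed
qed

lemma A_ideal_eq: "A_ideal h = Jset h"
proof -
  interpret cring "tc_ring :: 'a mpoly4 ring" by (rule tc_cring)
  have "A_ideal h \<subseteq> Jset h" unfolding A_ideal_def
  proof (rule genideal_minimal[OF Jset_ideal])
    have "X1 * X2 - hY h \<in> Jset h" unfolding Jset_def
      by (rule CollectI, rule exI[of _ 1], rule exI[of _ 0]) simp
    moreover have "Yv * Zv - 1 \<in> Jset h" unfolding Jset_def
      by (rule CollectI, rule exI[of _ 0], rule exI[of _ 1]) simp
    ultimately show "{X1 * X2 - hY h, Yv * Zv - 1} \<subseteq> Jset h" by simp
  qed
  moreover have "Jset h \<subseteq> A_ideal h"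
  proof
    fix P assume "P \<in> Jset h"
    then obtain U V where P: "P = U * (X1 * X2 - hY h) + V * (Yv * Zv - 1)" unfolding Jset_def by blast
    interpret I: ideal "A_ideal h" tc_ring unfolding A_ideal_def by (rule genideal_ideal) simp
    have g: "X1 * X2 - hY h \<in> A_ideal h" "Yv * Zv - 1 \<in> A_ideal h"
      unfolding A_ideal_def using genideal_self[of "{X1 * X2 - hY h, Yv * Zv - 1}"] by auto
    show "P \<in> A_ideal h" unfolding P using I.I_l_closed[OF g(1), of U] I.I_l_closed[OF g(2), of V]
      I.a_closed by auto
  qed
  ultimately show ?thesis by blast
qed

lemma A_ideal_ideal: "ideal (A_ideal h) tc_ring"
  unfolding A_ideal_eq by (rule Jset_ideal)



lemma J_add: "P \<in> Jset h \<Longrightarrow> Q \<in> Jset h \<Longrightarrow> P + Q \<in> Jset h"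
  unfolding Jset_def by (auto, rule_tac x="U+Ua" in exI, rule_tac x="V+Va" in exI, simp add: algebra_simps)
lemma J_mult: "P \<in> Jset h \<Longrightarrow> Q * P \<in> Jset h"
  unfolding Jset_def by (auto, rule_tac x="Q*U" in exI, rule_tac x="Q*V" in exI, simp add: algebra_simps)
lemma J_mult2: "P \<in> Jset h \<Longrightarrow> P * Q \<in> Jset h"
  using J_mult[of P h Q] by (simp add: mult.commute)
lemma J_uminus: "P \<in> Jset h \<Longrightarrow> - P \<in> Jset h"
  using J_mult[of P h "-1"] by simp
lemma J_diff: "P \<in> Jset h \<Longrightarrow> Q \<in> Jset h \<Longrightarrow> P - Q \<in> Jset h"
  using J_add[OF _ J_uminus] by (metis diff_conv_add_uminus)
lemma J_zero: "0 \<in> Jset h"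
  unfolding Jset_def by (rule CollectI, rule exI[of _ 0], rule exI[of _ 0]) simp
lemma J_gen1: "X1 * X2 - hY h \<in> Jset h"
  unfolding Jset_def by (rule CollectI, rule exI[of _ 1], rule exI[of _ 0]) simp
lemma J_gen2: "Yv * Zv - 1 \<in> Jset h"
  unfolding Jset_def by (rule CollectI, rule exI[of _ 0], rule exI[of _ 1]) simp
lemma J_sum: "finite S \<Longrightarrow> (\<And>i. i \<in> S \<Longrightarrow> F i \<in> Jset h) \<Longrightarrow> sum F S \<in> Jset h"
  by (induct S rule: finite_induct) (auto intro: J_add J_zero)

definition cls :: "'a::comm_ring_1 poly \<Rightarrow> 'a mpoly4 \<Rightarrow> 'a mpoly4 set" where
  "cls h P = A_ideal h +>\<^bsub>tc_ring\<^esub> P"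

lemma cls_alt: "cls h P = (\<lambda>Q. Q + P) ` Jset h"
  unfolding cls_def A_ideal_eq a_r_coset_def' by auto

lemma cls_eq: "cls h P = cls h Q \<longleftrightarrow> P - Q \<in> Jset h"
proof
  assume "cls h P = cls h Q"
  then have "P \<in> cls h Q" using J_zero[of h] unfolding cls_alt by (metis add_0 image_eqI)
  then obtain R where "R \<in> Jset h" "P = R + Q" unfolding cls_alt by auto
  then show "P - Q \<in> Jset h" by simp
next
  assume a: "P - Q \<in> Jset h"
  show "cls h P = cls h Q" unfolding cls_alt
  proof (intro equalityI subsetI)
    fix x assume "x \<in> (\<lambda>R. R + P) ` Jset h"
    then obtain R where "R \<in> Jset h" "x = R + P" by auto
    then show "x \<in> (\<lambda>R. R + Q) ` Jset h"
      using J_add[OF \<open>R \<in> Jset h\<close> a] by (auto intro!: image_eqI[of _ _ "R + (P - Q)"])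
  next
    fix x assume "x \<in> (\<lambda>R. R + Q) ` Jset h"
    then obtain R where "R \<in> Jset h" "x = R + Q" by auto
    then show "x \<in> (\<lambda>R. R + P) ` Jset h"
      using J_diff[OF \<open>R \<in> Jset h\<close> a] by (auto intro!: image_eqI[of _ _ "R - (P - Q)"])
  qed
qed

lemma cls_eq_iff_J: "cls h P = cls h 0 \<longleftrightarrow> P \<in> Jset h"
  by (simp add: cls_eq)

lemma A_alg_carrier: "carrier (A_alg h) = range (cls h)"
  unfolding A_alg_def FactRing_def A_RCOSETS_def' cls_def by auto

lemma A_alg_mult: "cls h P \<otimes>\<^bsub>A_alg h\<^esub> cls h Q = cls h (P * Q)"
proof -
  interpret ideal "A_ideal h" "tc_ring" by (rule A_ideal_ideal)
  show ?thesis unfolding A_alg_def FactRing_def cls_def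
    using rcoset_mult_add[of P Q] by simp
qed

lemma A_alg_add: "cls h P \<oplus>\<^bsub>A_alg h\<^esub> cls h Q = cls h (P + Q)"
proof -
  interpret ideal "A_ideal h" "tc_ring" by (rule A_ideal_ideal)
  show ?thesis unfolding A_alg_def FactRing_def cls_def
    using a_rcos_sum[of P Q] by simp
qed

lemma A_alg_one: "\<one>\<^bsub>A_alg h\<^esub> = cls h 1"
  unfolding A_alg_def FactRing_def cls_def by simp

lemma A_alg_zero: "\<zero>\<^bsub>A_alg h\<^esub> = cls h 0"
proof -
  interpret ideal "A_ideal h" "tc_ring" by (rule A_ideal_ideal)
  have "A_ideal h +>\<^bsub>tc_ring\<^esub> 0 = A_ideal h"
    using a_rcos_const[of 0] J_zero[of h] A_ideal_eq[of h] by simp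
  then show ?thesis unfolding A_alg_def FactRing_def cls_def by simp
qed

lemma A_alg_cring: "cring (A_alg h)"
proof -
  interpret ideal "A_ideal h" "tc_ring" by (rule A_ideal_ideal)
  interpret cring "tc_ring :: 'a mpoly4 ring" by (rule tc_cring)
  show ?thesis unfolding A_alg_def by (rule quotient_is_cring) (rule tc_cring)
qed

lemma A_alg_pow: "cls h P [^]\<^bsub>A_alg h\<^esub> (n::nat) = cls h (P ^ n)"
  by (induct n) (auto simp: A_alg_one A_alg_mult mult.commute)



definition rhom :: "('a::comm_ring_1 \<Rightarrow> 'b::comm_ring_1) \<Rightarrow> bool" where
  "rhom k \<longleftrightarrow> k 1 = 1 \<and> (\<forall>x y. k (x + y) = k x + k y) \<and> (\<forall>x y. k (x * y) = k x * k y)"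

lemma rhom_1: "rhom k \<Longrightarrow> k 1 = 1" by (simp add: rhom_def)
lemma rhom_add: "rhom k \<Longrightarrow> k (x + y) = k x + k y" by (simp add: rhom_def)
lemma rhom_mult: "rhom k \<Longrightarrow> k (x * y) = k x * k y" by (simp add: rhom_def)
lemma rhom_0: "rhom k \<Longrightarrow> k 0 = 0"
  using rhom_add[of k 0 0] by simp
lemma rhom_uminus: "rhom k \<Longrightarrow> k (- x) = - k x"
  using rhom_add[of k x "-x"] rhom_0[of k] by (simp add: eq_neg_iff_add_eq_0 add.commute)
lemma rhom_diff: "rhom k \<Longrightarrow> k (x - y) = k x - k y"
  using rhom_add[of k x "-y"] rhom_uminus[of k y] by simp
lemma rhom_pow: "rhom k \<Longrightarrow> k (x ^ n) = k x ^ n"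
  by (induct n) (simp_all add: rhom_1 rhom_mult)
lemma rhom_sum: "rhom k \<Longrightarrow> k (sum F S) = (\<Sum>i\<in>S. k (F i))"
  by (induct S rule: infinite_finite_induct) (simp_all add: rhom_0 rhom_add)
lemma rhom_of_nat: "rhom k \<Longrightarrow> k (of_nat n) = of_nat n"
  by (induct n) (simp_all add: rhom_0 rhom_1 rhom_add)
lemma rhom_comp: "rhom k \<Longrightarrow> rhom l \<Longrightarrow> rhom (l \<circ> k)"
  by (simp add: rhom_def)
lemma rhom_id: "rhom (\<lambda>x. x)"
  by (simp add: rhom_def)

lemma map_poly_add_hom: "rhom k \<Longrightarrow> map_poly k (p + q) = map_poly k p + map_poly k q"
  by (intro poly_eqI) (simp add: coeff_map_poly rhom_0 rhom_add)

lemma map_poly_smult_hom: "rhom k \<Longrightarrow> map_poly k (smult c p) = smult (k c) (map_poly k p)"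
  by (intro poly_eqI) (simp add: coeff_map_poly rhom_0 rhom_mult)

lemma map_poly_mult_hom: "rhom k \<Longrightarrow> map_poly k (p * q) = map_poly k p * map_poly k q"
  by (induct p) (simp_all add: map_poly_add_hom map_poly_smult_hom map_poly_pCons rhom_0)

lemma rhom_map_poly: "rhom k \<Longrightarrow> rhom (map_poly k)"
  using map_poly_add_hom[of k] map_poly_mult_hom[of k]
  by (auto simp: rhom_def map_poly_1)

definition ev1 :: "('a::comm_ring_1 \<Rightarrow> 'b::comm_ring_1) \<Rightarrow> 'b \<Rightarrow> 'a poly \<Rightarrow> 'b" where
  "ev1 k x p = poly (map_poly k p) x"

lemma rhom_ev1: "rhom k \<Longrightarrow> rhom (ev1 k x)"
  using rhom_map_poly[of k] unfolding rhom_def ev1_def by auto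

lemma ev1_const [simp]: "rhom k \<Longrightarrow> ev1 k x [:c:] = k c"
  by (simp add: ev1_def map_poly_pCons rhom_0)
lemma ev1_X [simp]: "rhom k \<Longrightarrow> ev1 k x [:0, 1:] = x"
  by (simp add: ev1_def map_poly_pCons rhom_0 rhom_1)
lemma ev1_pCons: "rhom k \<Longrightarrow> ev1 k x (pCons c p) = k c + x * ev1 k x p"
  by (simp add: ev1_def map_poly_pCons rhom_0)

definition sub4 :: "('a::comm_ring_1 \<Rightarrow> 'b::comm_ring_1) \<Rightarrow> 'b \<Rightarrow> 'b \<Rightarrow> 'b \<Rightarrow> 'b \<Rightarrow> 'a mpoly4 \<Rightarrow> 'b" where
  "sub4 k e1 e2 e3 e4 = ev1 (ev1 (ev1 (ev1 k e4) e3) e2) e1"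

lemma rhom_sub4: "rhom k \<Longrightarrow> rhom (sub4 k e1 e2 e3 e4)"
  unfolding sub4_def by (intro rhom_ev1)

lemma sub4_simps:
  assumes "rhom k"
  shows "sub4 k e1 e2 e3 e4 X1 = e1" "sub4 k e1 e2 e3 e4 X2 = e2"
    "sub4 k e1 e2 e3 e4 Zv = e3" "sub4 k e1 e2 e3 e4 Yv = e4"
    "sub4 k e1 e2 e3 e4 (const4 c) = k c"
    "sub4 k e1 e2 e3 e4 (hY p) = ev1 k e4 p"
  using assms
  by (simp_all add: sub4_def X1_def X2_def Zv_def Yv_def const4_def hY_def rhom_ev1 rhom_0 rhom_1)

lemma mpoly4_induct:
  fixes Q :: "'a::comm_ring_1 mpoly4 \<Rightarrow> bool"
  assumes c: "\<And>c. Q (const4 c)" and x1: "Q X1" and x2: "Q X2" and y: "Q Yv" and z: "Q Zv"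
    and add: "\<And>P R. Q P \<Longrightarrow> Q R \<Longrightarrow> Q (P + R)" and mult: "\<And>P R. Q P \<Longrightarrow> Q R \<Longrightarrow> Q (P * R)"
  shows "Q P"
proof -
  have l1: "Q [:[:[:p:]:]:]" for p :: "'a poly"
  proof (induct p)
    case 0 then show ?case using c[of 0] by (simp add: const4_def)
  next
    case (pCons a p)
    have "[:[:[:pCons a p:]:]:] = const4 a + Yv * [:[:[:p:]:]:]"
      by (simp add: const4_def Yv_def)
    then show ?case using add[OF c mult[OF y pCons(2)]] by simp
  qed
  have l2: "Q [:[:r:]:]" for r :: "'a poly poly"
  proof (induct r)
    case 0 then show ?case using l1[of 0] by simp
  next
    case (pCons a p)
    have "[:[:pCons a p:]:] = [:[:[:a:]:]:] + Zv * [:[:p:]:]"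
      by (simp add: Zv_def)
    then show ?case using add[OF l1 mult[OF z pCons(2)]] by simp
  qed
  have l3: "Q [:w:]" for w :: "'a poly poly poly"
  proof (induct w)
    case 0 then show ?case using l2[of 0] by simp
  next
    case (pCons a p)
    have "[:pCons a p:] = [:[:a:]:] + X2 * [:p:]"
      by (simp add: X2_def)
    then show ?case using add[OF l2 mult[OF x2 pCons(2)]] by simp
  qed
  show "Q P"
  proof (induct P)
    case 0 then show ?case using l3[of 0] by simp
  next
    case (pCons a p)
    have "pCons a p = [:a:] + X1 * p"
      by (simp add: X1_def)
    then show ?case using add[OF l3 mult[OF x1 pCons(2)]] by simp
  qed
qed



definition jc :: "'a::comm_ring_1 poly \<Rightarrow> 'a mpoly4 \<Rightarrow> 'a mpoly4 \<Rightarrow> bool" where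
  "jc h P Q \<longleftrightarrow> P - Q \<in> Jset h"

lemma jc_refl: "jc h P P" by (simp add: jc_def J_zero)
lemma jc_sym: "jc h P Q \<Longrightarrow> jc h Q P"
  unfolding jc_def using J_uminus by fastforce
lemma jc_trans: "jc h P Q \<Longrightarrow> jc h Q R \<Longrightarrow> jc h P R"
  unfolding jc_def using J_add by fastforce
lemma jc_add: "jc h P Q \<Longrightarrow> jc h P' Q' \<Longrightarrow> jc h (P + P') (Q + Q')"
  unfolding jc_def using J_add by (fastforce simp: algebra_simps)
lemma jc_mult: "jc h P Q \<Longrightarrow> jc h P' Q' \<Longrightarrow> jc h (P * P') (Q * Q')"
proof -
  assume a: "jc h P Q" "jc h P' Q'"
  have "P * P' - Q * Q' = (P - Q) * P' + Q * (P' - Q')" by (simp add: algebra_simps)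
  then show ?thesis using a unfolding jc_def by (metis J_add J_mult J_mult2)
qed
lemma jc_multL: "jc h P Q \<Longrightarrow> jc h (R * P) (R * Q)"
  using jc_mult[OF jc_refl] by blast
lemma jc_pow: "jc h P Q \<Longrightarrow> jc h (P ^ n) (Q ^ n)"
  by (induct n) (auto intro: jc_mult jc_refl)
lemma jc_gen1: "jc h (X1 * X2) (hY h)" using J_gen1 by (simp add: jc_def)
lemma jc_gen2: "jc h (Yv * Zv) 1" using J_gen2 by (simp add: jc_def)
lemma jc_J: "jc h P 0 \<longleftrightarrow> P \<in> Jset h" by (simp add: jc_def)

lemma rhom_hY: "rhom (hY :: 'a::comm_ring_1 poly \<Rightarrow> 'a mpoly4)"
  by (simp add: rhom_def hY_def one_pCons)

lemma hY_X: "hY [:0, 1:] = Yv" by (simp add: hY_def Yv_def)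
lemma hY_const: "hY [:c:] = const4 c" by (simp add: hY_def const4_def)

definition embA :: "'a::comm_ring_1 poly poly \<Rightarrow> 'a mpoly4" where "embA A = ev1 hY X1 A"
definition embB :: "'a::comm_ring_1 poly poly \<Rightarrow> 'a mpoly4" where "embB B = ev1 hY X2 B"

lemma rhom_embA: "rhom embA"
  unfolding embA_def[abs_def] by (rule rhom_ev1[OF rhom_hY])
lemma rhom_embB: "rhom embB"
  unfolding embB_def[abs_def] by (rule rhom_ev1[OF rhom_hY])

lemma embA_pCons: "embA (pCons c A) = hY c + X1 * embA A"
  by (simp add: embA_def ev1_pCons rhom_hY)
lemma embB_pCons: "embB (pCons c B) = hY c + X2 * embB B"
  by (simp add: embB_def ev1_pCons rhom_hY)
lemma embA_const: "embA [:c:] = hY c" by (simp add: embA_def rhom_hY)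
lemma embB_const: "embB [:c:] = hY c" by (simp add: embB_def rhom_hY)
lemma embA_smult: "embA (smult c A) = hY c * embA A"
  using rhom_mult[OF rhom_embA, of "[:c:]" A] by (simp add: embA_const)
lemma embB_smult: "embB (smult c B) = hY c * embB B"
  using rhom_mult[OF rhom_embB, of "[:c:]" B] by (simp add: embB_const)

lemma X1_embB:
  assumes "coeff B 0 = 0"
  shows "\<exists>A3 B3. coeff B3 0 = 0 \<and> jc h (X1 * embB B) (embA A3 + embB B3)"
proof -
  obtain B1 where B: "B = pCons 0 B1" using assms by (metis coeff_pCons_0 pCons_cases)
  have e1: "X1 * embB B = (X1 * X2) * embB B1" unfolding B embB_pCons by (simp add: rhom_0[OF rhom_hY])
  have "jc h (X1 * embB B) (hY h * embB B1)" unfolding e1 by (intro jc_mult jc_gen1 jc_refl)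
  moreover have "hY h * embB B1 = embA [:h * coeff B1 0:] + embB (smult h (B1 - [:coeff B1 0:]))"
    by (simp add: embB_smult embA_const embB_const rhom_diff[OF rhom_embB] rhom_mult[OF rhom_hY] algebra_simps)
  moreover have "coeff (smult h (B1 - [:coeff B1 0:])) 0 = 0" by simp
  ultimately show ?thesis by metis
qed

lemma mixed_NF:
  assumes "coeff B 0 = 0"
  shows "\<exists>A3 B3. coeff B3 0 = 0 \<and> jc h (embA A * embB B) (embA A3 + embB B3)"
proof (induct A)
  case 0
  show ?case by (rule exI[of _ 0], rule exI[of _ 0]) (simp add: rhom_0[OF rhom_embA] rhom_0[OF rhom_embB] jc_refl)
next
  case (pCons c A1)
  obtain A2 B2 where IH: "coeff B2 0 = 0" "jc h (embA A1 * embB B) (embA A2 + embB B2)"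
    using pCons(2) by blast
  obtain A3 B3 where X: "coeff B3 0 = 0" "jc h (X1 * embB B2) (embA A3 + embB B3)"
    using X1_embB[OF IH(1)] by blast
  have "embA (pCons c A1) * embB B = embB (smult c B) + X1 * (embA A1 * embB B)"
    by (simp add: embA_pCons embB_smult algebra_simps)
  moreover have "jc h (embB (smult c B) + X1 * (embA A1 * embB B))
      (embB (smult c B) + (embA (pCons 0 A2) + X1 * embB B2))"
  proof -
    have "jc h (embB (smult c B) + X1 * (embA A1 * embB B))
      (embB (smult c B) + X1 * (embA A2 + embB B2))"
      by (intro jc_add jc_refl jc_multL IH(2))
    moreover have "X1 * (embA A2 + embB B2) = embA (pCons 0 A2) + X1 * embB B2"
      by (simp add: embA_pCons rhom_0[OF rhom_hY] distrib_left)
    ultimately show ?thesis by simp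
  qed
  moreover have "jc h (embB (smult c B) + (embA (pCons 0 A2) + X1 * embB B2))
      (embB (smult c B) + (embA (pCons 0 A2) + (embA A3 + embB B3)))"
    by (intro jc_add jc_refl X(2))
  moreover have "embB (smult c B) + (embA (pCons 0 A2) + (embA A3 + embB B3))
     = embA (pCons 0 A2 + A3) + embB (smult c B + B3)"
    by (simp add: rhom_add[OF rhom_embA] rhom_add[OF rhom_embB] algebra_simps)
  moreover have "coeff (smult c B + B3) 0 = 0" using assms X(1) by simp
  ultimately show ?case by (metis jc_trans)
qed


lemma NF_exists:
  "\<exists>n A B. coeff B 0 = 0 \<and> jc h (Yv ^ n * P) (embA A + embB B)"
proof (induct P rule: mpoly4_induct)
  case (1 c)
  show ?case by (rule exI[of _ 0], rule exI[of _ "[:[:c:]:]"], rule exI[of _ 0])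
      (simp add: embA_const hY_const rhom_0[OF rhom_embB] jc_refl)
next
  case 2
  show ?case by (rule exI[of _ 0], rule exI[of _ "[:0, 1:]"], rule exI[of _ 0])
      (simp add: embA_pCons rhom_0[OF rhom_hY] rhom_1[OF rhom_hY] rhom_0[OF rhom_embB] rhom_0[OF rhom_embA] jc_refl)
next
  case 3
  show ?case by (rule exI[of _ 0], rule exI[of _ 0], rule exI[of _ "[:0, 1:]"])
      (simp add: embB_pCons rhom_0[OF rhom_hY] rhom_1[OF rhom_hY] rhom_0[OF rhom_embB] rhom_0[OF rhom_embA] jc_refl)
next
  case 4
  show ?case by (rule exI[of _ 0], rule exI[of _ "[:[:0, 1:]:]"], rule exI[of _ 0])
      (simp add: embA_const hY_X rhom_0[OF rhom_embB] jc_refl)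
next
  case 5
  show ?case by (rule exI[of _ 1], rule exI[of _ 1], rule exI[of _ 0])
      (simp add: rhom_1[OF rhom_embA] rhom_0[OF rhom_embB] jc_gen2)
next
  case (6 P R)
  then obtain n A B m A' B' where a: "coeff B 0 = 0" "jc h (Yv ^ n * P) (embA A + embB B)"
    "coeff B' 0 = 0" "jc h (Yv ^ m * R) (embA A' + embB B')" by blast
  have "jc h (Yv ^ m * (Yv ^ n * P) + Yv ^ n * (Yv ^ m * R))
     (Yv ^ m * (embA A + embB B) + Yv ^ n * (embA A' + embB B'))"
    by (intro jc_add jc_multL a)
  moreover have "Yv ^ m * (Yv ^ n * P) + Yv ^ n * (Yv ^ m * R) = Yv ^ (n + m) * (P + R)"
    by (simp add: algebra_simps power_add)
  moreover have "Yv ^ m * (embA A + embB B) + Yv ^ n * (embA A' + embB B') =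
    embA (smult ([:0,1:]^m) A + smult ([:0,1:]^n) A') + embB (smult ([:0,1:]^m) B + smult ([:0,1:]^n) B')"
    by (simp add: rhom_add[OF rhom_embA] rhom_add[OF rhom_embB] embA_smult embB_smult
        rhom_pow[OF rhom_hY] hY_X algebra_simps)
  moreover have "coeff (smult ([:0,1:]^m) B + smult ([:0,1:]^n) B') 0 = 0" using a by simp
  ultimately show ?case by metis
next
  case (7 P R)
  then obtain n A B m A' B' where a: "coeff B 0 = 0" "jc h (Yv ^ n * P) (embA A + embB B)"
    "coeff B' 0 = 0" "jc h (Yv ^ m * R) (embA A' + embB B')" by blast
  obtain A1 B1 where m1: "coeff B1 0 = 0" "jc h (embA A * embB B') (embA A1 + embB B1)"
    using mixed_NF[OF a(3)] by blast
  obtain A2 B2 where m2: "coeff B2 0 = 0" "jc h (embA A' * embB B) (embA A2 + embB B2)"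
    using mixed_NF[OF a(1)] by blast
  have s1: "jc h ((Yv ^ n * P) * (Yv ^ m * R)) ((embA A + embB B) * (embA A' + embB B'))"
    by (intro jc_mult a)
  have e1: "(Yv ^ n * P) * (Yv ^ m * R) = Yv ^ (n + m) * (P * R)"
    by (simp add: power_add ac_simps)
  have e2: "(embA A + embB B) * (embA A' + embB B') =
     embA (A * A') + embB (B * B') + (embA A * embB B') + (embA A' * embB B)"
    unfolding rhom_mult[OF rhom_embA] rhom_mult[OF rhom_embB] by (simp add: distrib_left distrib_right ac_simps)
  have s2: "jc h (embA (A * A') + embB (B * B') + (embA A * embB B') + (embA A' * embB B))
     (embA (A * A') + embB (B * B') + (embA A1 + embB B1) + (embA A2 + embB B2))"
    by (intro jc_add jc_refl m1 m2)
  have e3: "embA (A * A') + embB (B * B') + (embA A1 + embB B1) + (embA A2 + embB B2)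
     = embA (A * A' + A1 + A2) + embB (B * B' + B1 + B2)"
    unfolding rhom_add[OF rhom_embA] rhom_add[OF rhom_embB] by (simp add: ac_simps)
  have c: "coeff (B * B' + B1 + B2) 0 = 0" using a m1 m2 by (simp add: coeff_mult)
  have "jc h (Yv ^ (n + m) * (P * R)) (embA (A * A' + A1 + A2) + embB (B * B' + B1 + B2))"
    using jc_trans[OF s1[unfolded e1 e2] s2] e3 by simp
  then show ?case using c by blast
qed



lemma ev1_comp: "rhom k \<Longrightarrow> rhom l \<Longrightarrow> l (ev1 k x p) = ev1 (l \<circ> k) (l x) p"
proof (induct p)
  case 0 then show ?case by (simp add: ev1_def rhom_0)
next
  case (pCons a p)
  have "rhom (\<lambda>a. l (k a))" using rhom_comp[OF pCons(3,4)] by (simp add: comp_def)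
  then show ?case using pCons
    by (simp add: ev1_pCons rhom_add rhom_mult comp_def)
qed

lemma ev1_monom: "rhom k \<Longrightarrow> ev1 k x (monom c n) = k c * x ^ n"
  by (simp add: ev1_def map_poly_monom rhom_0 poly_monom)

lemma ev1_sum_coeffs: "rhom k \<Longrightarrow> degree p \<le> m \<Longrightarrow> ev1 k x p = (\<Sum>i\<le>m. k (coeff p i) * x ^ i)"
proof -
  assume k: "rhom k" and d: "degree p \<le> m"
  have "ev1 k x p = ev1 k x (\<Sum>i\<le>m. monom (coeff p i) i)"
    using poly_as_sum_of_monoms'[OF d] by simp
  also have "\<dots> = (\<Sum>i\<le>m. k (coeff p i) * x ^ i)"
    using k by (simp add: rhom_sum[OF rhom_ev1] ev1_monom)
  finally show ?thesis .
qed

definition poly2 :: "'a::comm_ring_1 poly poly \<Rightarrow> 'a \<Rightarrow> 'a \<Rightarrow> 'a" where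
  "poly2 W a t = ev1 (\<lambda>q. poly q t) a W"

lemma rhom_poly_at: "rhom (\<lambda>q. poly q t)"
  by (simp add: rhom_def)

lemma rhom_poly2: "rhom (\<lambda>W. poly2 W a t)"
  unfolding poly2_def by (rule rhom_ev1[OF rhom_poly_at])

definition evp :: "'a::field poly \<Rightarrow> 'a \<Rightarrow> 'a \<Rightarrow> 'a mpoly4 \<Rightarrow> 'a" where
  "evp h a t = sub4 (\<lambda>x. x) a (poly h t / a) (1 / t) t"

lemma rhom_evp: "rhom (evp h a t)"
  unfolding evp_def by (rule rhom_sub4[OF rhom_id])

lemma evp_simps:
  "evp h a t X1 = a" "evp h a t X2 = poly h t / a" "evp h a t Zv = 1 / t" "evp h a t Yv = t"
  "evp h a t (const4 c) = c" "evp h a t (hY p) = poly p t"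
  unfolding evp_def by (simp_all add: sub4_simps[OF rhom_id] ev1_def)

lemma evp_comp_hY: "evp h a t \<circ> hY = (\<lambda>q. poly q t)"
  by (rule ext) (simp add: evp_simps)

lemma evp_embA: "evp h a t (embA A) = poly2 A a t"
  unfolding embA_def poly2_def
  using ev1_comp[OF rhom_hY rhom_evp, where x=X1 and p=A] by (simp add: evp_comp_hY evp_simps)

lemma evp_embB: "evp h a t (embB B) = poly2 B (poly h t / a) t"
  unfolding embB_def poly2_def
  using ev1_comp[OF rhom_hY rhom_evp, where x=X2 and p=B] by (simp add: evp_comp_hY evp_simps)

lemma evp_J: "a \<noteq> 0 \<Longrightarrow> t \<noteq> 0 \<Longrightarrow> P \<in> Jset h \<Longrightarrow> evp h a t P = 0"
  unfolding Jset_def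
  by (auto simp: rhom_add[OF rhom_evp] rhom_mult[OF rhom_evp] rhom_diff[OF rhom_evp]
      rhom_1[OF rhom_evp] evp_simps)

lemma evp_jc: "a \<noteq> 0 \<Longrightarrow> t \<noteq> 0 \<Longrightarrow> jc h P Q \<Longrightarrow> evp h a t P = evp h a t Q"
  unfolding jc_def using evp_J[of a t "P - Q" h] by (simp add: rhom_diff[OF rhom_evp])

lemma poly_zero_cofinite:
  fixes p :: "'a::field_char_0 poly"
  assumes "finite S" "\<And>x. x \<notin> S \<Longrightarrow> poly p x = 0"
  shows "p = 0"
proof (rule ccontr)
  assume "p \<noteq> 0"
  then have "finite {x. poly p x = 0}" by (rule poly_roots_finite)
  then have "finite (S \<union> {x. poly p x = 0})" using assms(1) by simp
  moreover have "S \<union> {x. poly p x = 0} = UNIV" using assms(2) by auto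
  ultimately show False using infinite_UNIV_char_0 by auto
qed

lemma poly2_zero:
  fixes W :: "'a::field_char_0 poly poly"
  assumes "\<And>a t. a \<noteq> 0 \<Longrightarrow> t \<noteq> 0 \<Longrightarrow> poly2 W a t = 0"
  shows "W = 0"
proof (rule poly_eqI)
  fix i
  have "poly (coeff W i) t = 0" if t: "t \<noteq> 0" for t
  proof -
    have "map_poly (\<lambda>q. poly q t) W = 0"
      by (rule poly_zero_cofinite[of "{0}"]) (use assms t in \<open>auto simp: poly2_def ev1_def\<close>)
    then have "coeff (map_poly (\<lambda>q. poly q t) W) i = 0" by simp
    then show ?thesis by (simp add: coeff_map_poly)
  qed
  then have "coeff W i = 0" by (intro poly_zero_cofinite[of "{0}"]) auto
  then show "coeff W i = coeff 0 i" by simp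
qed

definition Wp :: "'a::comm_ring_1 poly \<Rightarrow> nat \<Rightarrow> 'a poly poly \<Rightarrow> 'a poly poly \<Rightarrow> 'a poly poly" where
  "Wp h m A B = monom 1 m * A + (\<Sum>j\<le>m. monom (coeff B j * h ^ j) (m - j))"

lemma Wp_eval:
  fixes h :: "'a::field poly"
  assumes a: "a \<noteq> 0" and d: "degree B \<le> m"
  shows "poly2 (Wp h m A B) a t = a ^ m * (poly2 A a t + poly2 B (poly h t / a) t)"
proof -
  have 1: "poly2 (monom 1 m * A) a t = a ^ m * poly2 A a t"
    by (simp add: poly2_def rhom_mult[OF rhom_ev1[OF rhom_poly_at]] ev1_monom[OF rhom_poly_at])
  have 2: "poly2 (\<Sum>j\<le>m. monom (coeff B j * h ^ j) (m - j)) a t =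
      (\<Sum>j\<le>m. poly (coeff B j) t * poly h t ^ j * a ^ (m - j))"
    by (simp add: poly2_def rhom_sum[OF rhom_ev1[OF rhom_poly_at]] ev1_monom[OF rhom_poly_at] poly_mult poly_power)
  have 3: "poly2 B (poly h t / a) t = (\<Sum>j\<le>m. poly (coeff B j) t * (poly h t / a) ^ j)"
    unfolding poly2_def by (rule ev1_sum_coeffs[OF rhom_poly_at d])
  have 4: "a ^ m * (poly h t / a) ^ j = poly h t ^ j * a ^ (m - j)" if "j \<le> m" for j
  proof -
    have "a ^ m = a ^ j * a ^ (m - j)" using that by (simp add: power_add[symmetric])
    then show ?thesis using a by (simp add: power_divide field_simps)
  qed
  have "a ^ m * poly2 B (poly h t / a) t = (\<Sum>j\<le>m. poly (coeff B j) t * poly h t ^ j * a ^ (m - j))"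
    unfolding 3 sum_distrib_left
  proof (rule sum.cong)
    fix j assume "j \<in> {..m}"
    then have "a ^ m * (poly h t / a) ^ j = poly h t ^ j * a ^ (m - j)" using 4 by simp
    then show "a ^ m * (poly (coeff B j) t * (poly h t / a) ^ j) = poly (coeff B j) t * poly h t ^ j * a ^ (m - j)"
      by (metis mult.assoc mult.left_commute)
  qed simp
  then show ?thesis unfolding Wp_def rhom_add[OF rhom_poly2] 1 2 by (simp add: algebra_simps)
qed

lemma Wp_coeff:
  "coeff (Wp h m A B) i = (if m \<le> i then coeff A (i - m) else 0) +
     (if i \<le> m then coeff B (m - i) * h ^ (m - i) else 0)"
proof -
  have "coeff (\<Sum>j\<le>m. monom (coeff B j * h ^ j) (m - j)) i =
     (\<Sum>j\<le>m. if j = m - i \<and> i \<le> m then coeff B j * h ^ j else 0)"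
    unfolding coeff_sum by (rule sum.cong) (auto simp: coeff_monom)
  also have "\<dots> = (if i \<le> m then coeff B (m - i) * h ^ (m - i) else 0)"
    by (auto simp: sum.delta' if_distrib cong: if_cong)
  finally show ?thesis unfolding Wp_def by (simp add: coeff_monom_mult not_le)
qed

lemma Y_Z_pow: "jc h (Yv ^ n * Zv ^ n) 1"
  using jc_pow[OF jc_gen2, of h n] by (simp add: power_mult_distrib)

lemma J_cancel_Y: "Yv ^ n * P \<in> Jset h \<Longrightarrow> P \<in> Jset h"
proof -
  assume a: "Yv ^ n * P \<in> Jset h"
  have "jc h (Zv ^ n * (Yv ^ n * P)) 0" using jc_multL[OF a[folded jc_J], of "Zv ^ n"] by simp
  moreover have "jc h (Zv ^ n * (Yv ^ n * P)) P"
    using jc_mult[OF Y_Z_pow jc_refl, of h n P] by (simp add: ac_simps)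
  ultimately show ?thesis by (meson jc_J jc_sym jc_trans)
qed

lemma NF_zero:
  fixes h :: "'a::field_char_0 poly"
  assumes h: "h \<noteq> 0" and B0: "coeff B 0 = 0"
    and z: "\<And>a t. a \<noteq> 0 \<Longrightarrow> t \<noteq> 0 \<Longrightarrow> poly2 A a t + poly2 B (poly h t / a) t = 0"
  shows "A = 0 \<and> B = 0"
proof -
  define m where "m = degree B"
  have "Wp h m A B = 0"
    by (rule poly2_zero) (simp add: Wp_eval m_def z)
  then have c: "coeff (Wp h m A B) i = 0" for i by simp
  have "coeff A j = 0" for j
    using c[of "j + m"] B0 by (cases j) (auto simp: Wp_coeff)
  moreover have "coeff B j = 0" for j
  proof (cases "j \<le> m")
    case True
    then show ?thesis
    proof (cases j)
      case 0 then show ?thesis using B0 by simp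
    next
      case (Suc j')
      have "\<not> m \<le> m - j" "m - j \<le> m" "m - (m - j) = j" using True Suc by auto
      then have "coeff B j * h ^ j = 0" using c[of "m - j"] by (simp only: Wp_coeff if_False if_True) simp
      then show ?thesis using h by simp
    qed
  next
    case False then show ?thesis by (simp add: m_def coeff_eq_0)
  qed
  ultimately show ?thesis by (simp add: poly_eq_iff)
qed

lemma evp_inj:
  fixes h :: "'a::field_char_0 poly"
  assumes h: "h \<noteq> 0" and z: "\<And>a t. a \<noteq> 0 \<Longrightarrow> t \<noteq> 0 \<Longrightarrow> evp h a t P = 0"
  shows "P \<in> Jset h"
proof -
  obtain n A B where nf: "coeff B 0 = 0" "jc h (Yv ^ n * P) (embA A + embB B)"
    using NF_exists by blast
  have "poly2 A a t + poly2 B (poly h t / a) t = 0" if "a \<noteq> 0" "t \<noteq> 0" for a t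
    using evp_jc[OF that nf(2)] z[OF that]
    by (simp add: rhom_add[OF rhom_evp] rhom_mult[OF rhom_evp] evp_embA evp_embB)
  then have "A = 0 \<and> B = 0" using NF_zero[OF h nf(1)] by blast
  then have "Yv ^ n * P \<in> Jset h" using nf(2)
    by (simp add: jc_J rhom_0[OF rhom_embA] rhom_0[OF rhom_embB])
  then show ?thesis by (rule J_cancel_Y)
qed



lemma rhom_const4: "rhom (const4 :: 'a::comm_ring_1 \<Rightarrow> 'a mpoly4)"
  by (simp add: rhom_def const4_def one_pCons)

lemma sub4_comp:
  assumes k: "rhom k" and l: "rhom l"
  shows "l (sub4 k e1 e2 e3 e4 P) = sub4 (l \<circ> k) (l e1) (l e2) (l e3) (l e4) P"
proof -
  have r4: "rhom (ev1 k e4)" using k by (rule rhom_ev1)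
  have r3: "rhom (ev1 (ev1 k e4) e3)" using r4 by (rule rhom_ev1)
  have r2: "rhom (ev1 (ev1 (ev1 k e4) e3) e2)" using r3 by (rule rhom_ev1)
  have c4: "l \<circ> ev1 k e4 = ev1 (l \<circ> k) (l e4)"
    by (rule ext) (simp add: ev1_comp[OF k l])
  have c3: "l \<circ> ev1 (ev1 k e4) e3 = ev1 (ev1 (l \<circ> k) (l e4)) (l e3)"
    by (rule ext) (simp add: ev1_comp[OF r4 l] c4)
  have c2: "l \<circ> ev1 (ev1 (ev1 k e4) e3) e2 = ev1 (ev1 (ev1 (l \<circ> k) (l e4)) (l e3)) (l e2)"
    by (rule ext) (simp add: ev1_comp[OF r3 l] c3)
  show ?thesis unfolding sub4_def by (simp add: ev1_comp[OF r2 l] c2)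
qed

lemma evp_comp_const4: "evp h a t \<circ> const4 = (\<lambda>x. x)"
  by (rule ext) (simp add: evp_simps)

lemma evp_sub4: "evp h a t (sub4 const4 e1 e2 e3 e4 P) =
    sub4 (\<lambda>x. x) (evp h a t e1) (evp h a t e2) (evp h a t e3) (evp h a t e4) P"
  by (simp add: sub4_comp[OF rhom_const4 rhom_evp] evp_comp_const4)

lemma jc_by_eval:
  fixes h :: "'a::field_char_0 poly"
  assumes "h \<noteq> 0" "\<And>a t. a \<noteq> 0 \<Longrightarrow> t \<noteq> 0 \<Longrightarrow> evp h a t P = evp h a t Q"
  shows "jc h P Q"
  unfolding jc_def by (rule evp_inj) (use assms in \<open>simp_all add: rhom_diff[OF rhom_evp]\<close>)

lemma jc_comp_all:
  assumes T: "rhom T" and T': "rhom T'"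
    and g: "jc h (T' (T X1)) X1" "jc h (T' (T X2)) X2" "jc h (T' (T Yv)) Yv" "jc h (T' (T Zv)) Zv"
    and c: "\<And>c. T' (T (const4 c)) = const4 c"
  shows "jc h (T' (T P)) P"
proof (induct P rule: mpoly4_induct)
  case (6 P R) then show ?case by (simp add: rhom_add[OF T] rhom_add[OF T'] jc_add)
next
  case (7 P R) then show ?case by (simp add: rhom_mult[OF T] rhom_mult[OF T'] jc_mult)
qed (use g c jc_refl in auto)

lemma J_map:
  assumes T: "rhom T" and P: "P \<in> Jset f"
    and "T (X1 * X2 - hY f) \<in> Jset g" "T (Yv * Zv - 1) \<in> Jset g"
  shows "T P \<in> Jset g"
proof -
  obtain U V where "P = U * (X1 * X2 - hY f) + V * (Yv * Zv - 1)" using P unfolding Jset_def by blast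
  then show ?thesis using assms(3,4)
    by (simp add: rhom_add[OF T] rhom_mult[OF T] J_add J_mult)
qed

definition phi_of :: "'a::comm_ring_1 poly \<Rightarrow> 'a poly \<Rightarrow> ('a mpoly4 \<Rightarrow> 'a mpoly4) \<Rightarrow> 'a mpoly4 set \<Rightarrow> 'a mpoly4 set" where
  "phi_of f g T X = cls g (T (SOME P. X = cls f P))"

lemma phi_of_cls:
  assumes T: "rhom T" and J: "\<And>P. P \<in> Jset f \<Longrightarrow> T P \<in> Jset g"
  shows "phi_of f g T (cls f P) = cls g (T P)"
proof -
  define P' where "P' = (SOME P'. cls f P = cls f P')"
  have "cls f P = cls f P'" unfolding P'_def by (rule someI) (rule refl)
  then have "P - P' \<in> Jset f" by (simp add: cls_eq)
  then have "P' - P \<in> Jset f" using J_uminus by fastforce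
  then have "T P' - T P \<in> Jset g" using J[of "P' - P"] by (simp add: rhom_diff[OF T])
  then show ?thesis unfolding phi_of_def P'_def[symmetric] by (simp add: cls_eq)
qed

lemma iso_from_subs:
  fixes f g :: "'a::comm_ring_1 poly"
  assumes T: "rhom T" and T': "rhom T'"
    and J: "\<And>P. P \<in> Jset f \<Longrightarrow> T P \<in> Jset g" and J': "\<And>Q. Q \<in> Jset g \<Longrightarrow> T' Q \<in> Jset f"
    and c1: "\<And>P. jc f (T' (T P)) P" and c2: "\<And>Q. jc g (T (T' Q)) Q"
    and k: "\<And>c. T (const4 c) = const4 c"
  shows "A_kalg_iso f g"
proof -
  let ?phi = "phi_of f g T"
  have pc: "?phi (cls f P) = cls g (T P)" for P by (rule phi_of_cls[OF T J])
  have "?phi \<in> ring_iso (A_alg f) (A_alg g)"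
  proof (rule ring_iso_memI)
    fix x assume "x \<in> carrier (A_alg f)"
    then obtain P where "x = cls f P" by (auto simp: A_alg_carrier)
    then show "?phi x \<in> carrier (A_alg g)" by (simp add: pc A_alg_carrier)
  next
    fix x y assume "x \<in> carrier (A_alg f)" "y \<in> carrier (A_alg f)"
    then obtain P Q where "x = cls f P" "y = cls f Q" by (auto simp: A_alg_carrier)
    then show "?phi (x \<otimes>\<^bsub>A_alg f\<^esub> y) = ?phi x \<otimes>\<^bsub>A_alg g\<^esub> ?phi y"
      "?phi (x \<oplus>\<^bsub>A_alg f\<^esub> y) = ?phi x \<oplus>\<^bsub>A_alg g\<^esub> ?phi y"
      by (simp_all add: pc A_alg_mult A_alg_add rhom_mult[OF T] rhom_add[OF T])
  next
    show "?phi \<one>\<^bsub>A_alg f\<^esub> = \<one>\<^bsub>A_alg g\<^esub>" by (simp add: A_alg_one pc rhom_1[OF T])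
  next
    show "bij_betw ?phi (carrier (A_alg f)) (carrier (A_alg g))"
    proof (rule bij_betw_imageI)
      show "inj_on ?phi (carrier (A_alg f))"
      proof (rule inj_onI)
        fix x y assume "x \<in> carrier (A_alg f)" "y \<in> carrier (A_alg f)" and e: "?phi x = ?phi y"
        then obtain P Q where xy: "x = cls f P" "y = cls f Q" by (auto simp: A_alg_carrier)
        then have "T P - T Q \<in> Jset g" using e by (simp add: pc cls_eq)
        then have "T' (T P) - T' (T Q) \<in> Jset f" using J'[of "T P - T Q"] by (simp add: rhom_diff[OF T'])
        then have "jc f (T' (T P)) (T' (T Q))" by (simp add: jc_def)
        then have "jc f P Q" by (meson c1 jc_sym jc_trans)
        then show "x = y" unfolding xy by (simp add: cls_eq jc_def)
      qed
    next
      show "?phi ` carrier (A_alg f) = carrier (A_alg g)"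
      proof (intro equalityI subsetI)
        fix y assume "y \<in> ?phi ` carrier (A_alg f)"
        then show "y \<in> carrier (A_alg g)" by (auto simp: A_alg_carrier pc)
      next
        fix y assume "y \<in> carrier (A_alg g)"
        then obtain Q where y: "y = cls g Q" by (auto simp: A_alg_carrier)
        have "?phi (cls f (T' Q)) = y" unfolding pc y using c2[of Q] by (simp add: cls_eq jc_def)
        then show "y \<in> ?phi ` carrier (A_alg f)" by (auto simp: A_alg_carrier)
      qed
    qed
  qed
  moreover have "?phi (A_ideal f +>\<^bsub>tc_ring\<^esub> const4 c) = A_ideal g +>\<^bsub>tc_ring\<^esub> const4 c" for c
    using pc[of "const4 c"] by (simp add: cls_def k)
  ultimately show ?thesis unfolding A_kalg_iso_def by blast
qed



lemma ev1_id: "ev1 (\<lambda>x. x) x p = poly p x" by (simp add: ev1_def)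

lemma evp_ev1_const4: "evp h a t (ev1 const4 e p) = poly p (evp h a t e)"
  using ev1_comp[OF rhom_const4 rhom_evp, where x=e and p=p] by (simp add: evp_comp_const4 ev1_id)

lemmas sev_simps = ev1_id evp_ev1_const4 rhom_add[OF rhom_sub4[OF rhom_id]] rhom_mult[OF rhom_sub4[OF rhom_id]]
  rhom_diff[OF rhom_sub4[OF rhom_id]] rhom_1[OF rhom_sub4[OF rhom_id]] rhom_pow[OF rhom_sub4[OF rhom_id]]
  sub4_simps[OF rhom_id]
  rhom_add[OF rhom_evp] rhom_mult[OF rhom_evp] rhom_diff[OF rhom_evp] rhom_1[OF rhom_evp]
  rhom_pow[OF rhom_evp] evp_simps evp_sub4
  rhom_add[OF rhom_sub4[OF rhom_const4]] rhom_mult[OF rhom_sub4[OF rhom_const4]]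
  rhom_diff[OF rhom_sub4[OF rhom_const4]] rhom_1[OF rhom_sub4[OF rhom_const4]] rhom_pow[OF rhom_sub4[OF rhom_const4]]
  sub4_simps[OF rhom_const4]

lemma if_case1:
  fixes f g :: "'a::field_char_0 poly"
  assumes f: "f \<noteq> 0" and g: "g \<noteq> 0" and lam: "lam \<noteq> 0" and c: "c \<noteq> 0"
    and hyp: "\<And>y. poly g y = lam * poly f (c * y)"
  shows "A_kalg_iso f g"
proof -
  define T where "T = sub4 const4 (const4 (1/lam) * X1) X2 (const4 (1/c) * Zv) (const4 c * Yv)"
  define T' where "T' = sub4 const4 (const4 lam * X1) X2 (const4 c * Zv) (const4 (1/c) * Yv)"
  have rT: "rhom T" "rhom T'" unfolding T_def T'_def by (simp_all add: rhom_sub4 rhom_const4)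
  show ?thesis
  proof (rule iso_from_subs[OF rT])
    fix P assume "P \<in> Jset f"
    then show "T P \<in> Jset g"
    proof (rule J_map[OF rT(1)])
      show "T (X1 * X2 - hY f) \<in> Jset g"
        by (rule evp_inj[OF g]) (simp add: T_def sev_simps hyp lam)
      show "T (Yv * Zv - 1) \<in> Jset g"
        by (rule evp_inj[OF g]) (simp add: T_def sev_simps c)
    qed
  next
    fix P assume "P \<in> Jset g"
    then show "T' P \<in> Jset f"
    proof (rule J_map[OF rT(2)])
      show "T' (X1 * X2 - hY g) \<in> Jset f"
        by (rule evp_inj[OF f]) (simp add: T'_def sev_simps hyp c)
      show "T' (Yv * Zv - 1) \<in> Jset f"
        by (rule evp_inj[OF f]) (simp add: T'_def sev_simps c)
    qed
  next
    fix P show "jc f (T' (T P)) P"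
      by (rule jc_comp_all[OF rT(1,2)], (rule jc_by_eval[OF f], simp add: T_def T'_def sev_simps lam c)+)
        (simp add: T_def T'_def sev_simps)
  next
    fix P show "jc g (T (T' P)) P"
      by (rule jc_comp_all[OF rT(2,1)], (rule jc_by_eval[OF g], simp add: T_def T'_def sev_simps lam c)+)
        (simp add: T_def T'_def sev_simps)
  next
    fix x show "T (const4 x) = const4 x" by (simp add: T_def sev_simps)
  qed
qed

lemma if_case2:
  fixes f g :: "'a::field_char_0 poly"
  assumes f: "f \<noteq> 0" and g: "g \<noteq> 0" and lam: "lam \<noteq> 0" and c: "c \<noteq> 0"
    and hyp: "\<And>y. y \<noteq> 0 \<Longrightarrow> poly g y = lam * y ^ s * poly f (c / y)"
  shows "A_kalg_iso f g"
proof -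
  define T where "T = sub4 const4 (const4 (1/lam) * Zv ^ s * X1) X2 (const4 (1/c) * Yv) (const4 c * Zv)"
  define T' where "T' = sub4 const4 (const4 (lam * c ^ s) * Zv ^ s * X1) X2 (const4 (1/c) * Yv) (const4 c * Zv)"
  have rT: "rhom T" "rhom T'" unfolding T_def T'_def by (simp_all add: rhom_sub4 rhom_const4)
  show ?thesis
  proof (rule iso_from_subs[OF rT])
    fix P assume "P \<in> Jset f"
    then show "T P \<in> Jset g"
    proof (rule J_map[OF rT(1)])
      show "T (X1 * X2 - hY f) \<in> Jset g"
      proof (rule evp_inj[OF g])
        fix a t :: 'a assume a: "a \<noteq> 0" and t: "t \<noteq> 0"
        show "evp g a t (T (X1 * X2 - hY f)) = 0"
          using hyp[OF t] a t lam by (simp add: T_def sev_simps power_divide field_simps)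
      qed
      show "T (Yv * Zv - 1) \<in> Jset g"
        by (rule evp_inj[OF g]) (simp add: T_def sev_simps c)
    qed
  next
    fix P assume "P \<in> Jset g"
    then show "T' P \<in> Jset f"
    proof (rule J_map[OF rT(2)])
      show "T' (X1 * X2 - hY g) \<in> Jset f"
      proof (rule evp_inj[OF f])
        fix a t :: 'a assume a: "a \<noteq> 0" and t: "t \<noteq> 0"
        have ct: "c * (1 / t) \<noteq> 0" using c t by simp
        have e: "c / (c * (1 / t)) = t" using c t by (simp add: field_simps)
        show "evp f a t (T' (X1 * X2 - hY g)) = 0"
          using hyp[OF ct] a t lam c unfolding e by (simp add: T'_def sev_simps power_divide field_simps)
      qed
      show "T' (Yv * Zv - 1) \<in> Jset f"
        by (rule evp_inj[OF f]) (simp add: T'_def sev_simps c)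
    qed
  next
    fix P show "jc f (T' (T P)) P"
      by (rule jc_comp_all[OF rT(1,2)], (rule jc_by_eval[OF f],
          simp add: T_def T'_def sev_simps lam c power_divide field_simps)+)
        (simp add: T_def T'_def sev_simps)
  next
    fix P show "jc g (T (T' P)) P"
      by (rule jc_comp_all[OF rT(2,1)], (rule jc_by_eval[OF g],
          simp add: T_def T'_def sev_simps lam c power_divide field_simps)+)
        (simp add: T_def T'_def sev_simps)
  next
    fix x show "T (const4 x) = const4 x" by (simp add: T_def sev_simps)
  qed
qed



lemma X_pow_monom: "[:0, 1:] ^ n = monom 1 n"
  by (simp add: monom_altdef)

lemma factor_X:
  fixes p :: "'b::idom poly"
  assumes "p \<noteq> 0"
  shows "\<exists>k0 p1. p = monom 1 k0 * p1 \<and> coeff p1 0 \<noteq> 0"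
proof -
  obtain q where q: "p = [:- 0, 1:] ^ Polynomial.order 0 p * q" "\<not> [:- 0, 1:] dvd q"
    using Polynomial.order_decomp[OF assms, of 0] by blast
  have "coeff q 0 \<noteq> 0" using q(2) poly_eq_0_iff_dvd[of q 0] by (simp add: poly_0_coeff_0)
  then show ?thesis using q(1) by (auto simp: X_pow_monom)
qed

lemma mono_factor:
  fixes p q :: "'b::idom poly"
  assumes pq: "p * q = monom C M" and C: "C \<noteq> 0"
  shows "\<exists>e. p = monom (coeff p e) e \<and> coeff p e \<noteq> 0"
proof -
  have p0: "p \<noteq> 0" and q0: "q \<noteq> 0" using pq C by auto
  obtain o1 p1 where p1: "p = monom 1 o1 * p1" "coeff p1 0 \<noteq> 0" using factor_X[OF p0] by blast
  obtain o2 q1 where q1: "q = monom 1 o2 * q1" "coeff q1 0 \<noteq> 0" using factor_X[OF q0] by blast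
  have "p * q = (monom 1 o1 * monom 1 o2) * (p1 * q1)" unfolding p1(1) q1(1) by (simp add: ac_simps)
  then have e: "monom 1 (o1 + o2) * (p1 * q1) = monom C M" using pq by (simp add: mult_monom)
  have "coeff (monom 1 (o1 + o2) * (p1 * q1)) (o1 + o2) = coeff p1 0 * coeff q1 0"
    by (simp only: coeff_monom_mult) (simp add: coeff_mult)
  then have "coeff (monom C M) (o1 + o2) \<noteq> 0" using e p1(2) q1(2) by simp
  then have M: "M = o1 + o2" by (simp add: coeff_monom split: if_splits)
  have "monom 1 M * [:C:] = monom C M" using mult_monom[of 1 M C 0] by (simp add: monom_0)
  then have "monom 1 M * (p1 * q1) = monom 1 M * [:C:]" using e M by simp
  moreover have "monom 1 M \<noteq> (0 :: 'b poly)" by simp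
  ultimately have "p1 * q1 = [:C:]" using mult_left_cancel by blast
  moreover have "p1 \<noteq> 0" "q1 \<noteq> 0" using p1(2) q1(2) by auto
  ultimately have "degree p1 + degree q1 = 0"
    using degree_mult_eq[of p1 q1] by simp
  then have "degree p1 = 0" by simp
  then have "p1 = [:coeff p1 0:]" by (rule degree_0_id[symmetric])
  then have "p = monom 1 o1 * monom (coeff p1 0) 0" using p1(1) by (simp add: monom_0)
  then have "p = monom (coeff p1 0) o1" by (simp add: mult_monom)
  then show ?thesis using p1(2) by (intro exI[of _ o1]) simp
qed

lemma dvd_cancel_X1:
  fixes g S :: "'a::idom poly"
  assumes g0: "coeff g 0 \<noteq> 0" and d: "g dvd [:0, 1:] * S"
  shows "g dvd S"
proof -
  obtain q where q: "[:0, 1:] * S = g * q" using d by (auto elim: dvdE)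
  have "coeff ([:0, 1:] * S) 0 = 0" by simp
  then have "coeff g 0 * coeff q 0 = 0" unfolding q by (simp add: coeff_mult)
  then have "coeff q 0 = 0" using g0 by simp
  then obtain q' where "q = pCons 0 q'" by (metis coeff_pCons_0 pCons_cases)
  then have "q = [:0, 1:] * q'" by simp
  then have "[:0, 1:] * S = [:0, 1:] * (g * q')" using q by (simp add: ac_simps)
  then have "S = g * q'" by (simp add: mult_left_cancel)
  then show ?thesis by simp
qed

lemma dvd_cancel_X:
  fixes g R :: "'a::idom poly"
  assumes "coeff g 0 \<noteq> 0" "g dvd [:0, 1:] ^ N * R"
  shows "g dvd R"
  using assms(2)
proof (induct N)
  case 0 then show ?case by simp
next
  case (Suc N)
  then show ?case using dvd_cancel_X1[OF assms(1), of "[:0, 1:] ^ N * R"] by (simp add: ac_simps)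
qed

lemma dvd_X_pow:
  fixes C :: "'a::field poly"
  assumes "C dvd [:0, 1:] ^ N" "C \<noteq> 0"
  shows "\<exists>c j. c \<noteq> 0 \<and> C = monom c j"
proof -
  obtain o1 p1 where p1: "C = monom 1 o1 * p1" "coeff p1 0 \<noteq> 0" using factor_X[OF assms(2)] by blast
  have "p1 dvd [:0, 1:] ^ N * 1" using assms(1) p1(1) by (metis dvd_mult_right mult.right_neutral)
  then have "p1 dvd 1" by (rule dvd_cancel_X[OF p1(2)])
  then obtain c where c: "p1 = [:c:]" "c dvd 1" by (auto simp: is_unit_poly_iff)
  then have "c \<noteq> 0" by auto
  then show ?thesis using p1(1) c(1) by (intro exI[of _ c] exI[of _ o1]) (simp add: monom_0[symmetric] mult_monom)
qed



definition Phi :: "'a::field poly \<Rightarrow> 'a mpoly4 set \<Rightarrow> 'a \<Rightarrow> 'a \<Rightarrow> 'a" where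
  "Phi h X a t = evp h a t (SOME P. X = cls h P)"

lemma Phi_cls:
  assumes "a \<noteq> 0" "t \<noteq> 0"
  shows "Phi h (cls h P) a t = evp h a t P"
proof -
  define P' where "P' = (SOME P'. cls h P = cls h P')"
  have "cls h P = cls h P'" unfolding P'_def by (rule someI) (rule refl)
  then have "jc h P' P" by (simp add: cls_eq jc_def J_uminus) (metis J_uminus minus_diff_eq)
  then show ?thesis unfolding Phi_def P'_def[symmetric] using evp_jc[OF assms] by blast
qed

lemma Phi_mult:
  assumes "X \<in> carrier (A_alg h)" "Y \<in> carrier (A_alg h)" "a \<noteq> 0" "t \<noteq> 0"
  shows "Phi h (X \<otimes>\<^bsub>A_alg h\<^esub> Y) a t = Phi h X a t * Phi h Y a t"
proof -
  obtain P Q where "X = cls h P" "Y = cls h Q" using assms(1,2) by (auto simp: A_alg_carrier)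
  then show ?thesis using assms(3,4) by (simp add: A_alg_mult Phi_cls rhom_mult[OF rhom_evp])
qed

lemma Phi_add:
  assumes "X \<in> carrier (A_alg h)" "Y \<in> carrier (A_alg h)" "a \<noteq> 0" "t \<noteq> 0"
  shows "Phi h (X \<oplus>\<^bsub>A_alg h\<^esub> Y) a t = Phi h X a t + Phi h Y a t"
proof -
  obtain P Q where "X = cls h P" "Y = cls h Q" using assms(1,2) by (auto simp: A_alg_carrier)
  then show ?thesis using assms(3,4) by (simp add: A_alg_add Phi_cls rhom_add[OF rhom_evp])
qed

lemma Phi_one: "a \<noteq> 0 \<Longrightarrow> t \<noteq> 0 \<Longrightarrow> Phi h \<one>\<^bsub>A_alg h\<^esub> a t = 1"
  by (simp add: A_alg_one Phi_cls rhom_1[OF rhom_evp])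

lemma Phi_inj:
  fixes h :: "'a::field_char_0 poly"
  assumes h: "h \<noteq> 0" and X: "X \<in> carrier (A_alg h)" and Y: "Y \<in> carrier (A_alg h)"
    and e: "\<And>a t. a \<noteq> 0 \<Longrightarrow> t \<noteq> 0 \<Longrightarrow> Phi h X a t = Phi h Y a t"
  shows "X = Y"
proof -
  obtain P Q where PQ: "X = cls h P" "Y = cls h Q" using X Y by (auto simp: A_alg_carrier)
  have "P - Q \<in> Jset h"
    by (rule evp_inj[OF h]) (use e in \<open>simp add: PQ Phi_cls rhom_diff[OF rhom_evp]\<close>)
  then show ?thesis by (simp add: PQ cls_eq)
qed

lemma poly2_const: "poly2 [:q:] a t = poly q t"
  by (simp add: poly2_def rhom_poly_at)

lemma poly2_mult: "poly2 (p * q) a t = poly2 p a t * poly2 q a t"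
  using rhom_mult[OF rhom_poly2] by blast

lemma poly2_monom: "poly2 (monom q e) a t = poly q t * a ^ e"
  by (simp add: poly2_def ev1_monom[OF rhom_poly_at])

lemma mono_analysis:
  fixes h Rp :: "'a::field_char_0 poly"
  assumes h: "h \<noteq> 0" and Rp: "Rp \<noteq> 0"
    and hyp: "\<And>a t. a \<noteq> 0 \<Longrightarrow> t \<noteq> 0 \<Longrightarrow> t ^ N0 * (evp h a t P * evp h a t Q) = poly Rp t"
  shows "(\<exists>N. h dvd [:0, 1:] ^ N * Rp) \<or>
    (\<exists>C1 C2 n1 n2. C1 \<noteq> 0 \<and> C2 \<noteq> 0 \<and> C1 * C2 * [:0, 1:] ^ N0 = [:0, 1:] ^ (n1 + n2) * Rp \<and>
      (\<forall>a t. a \<noteq> 0 \<longrightarrow> t \<noteq> 0 \<longrightarrow> evp h a t P = poly C1 t / t ^ n1 \<and> evp h a t Q = poly C2 t / t ^ n2))"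
proof -
  obtain n A B where nf1: "coeff B 0 = 0" "jc h (Yv ^ n * P) (embA A + embB B)"
    using NF_exists by blast
  obtain n' A' B' where nf2: "coeff B' 0 = 0" "jc h (Yv ^ n' * Q) (embA A' + embB B')"
    using NF_exists by blast
  define m where "m = degree B"
  define m' where "m' = degree B'"
  define W where "W = Wp h m A B"
  define W' where "W' = Wp h m' A' B'"
  define x where "x = ([:0, 1:] :: 'a poly)"
  have wP: "poly2 W a t = a ^ m * (t ^ n * evp h a t P)" if "a \<noteq> 0" "t \<noteq> 0" for a t
  proof -
    have "t ^ n * evp h a t P = poly2 A a t + poly2 B (poly h t / a) t"
      using evp_jc[OF that nf1(2)] by (simp add: rhom_add[OF rhom_evp] rhom_mult[OF rhom_evp]
          rhom_pow[OF rhom_evp] evp_simps evp_embA evp_embB)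
    then show ?thesis unfolding W_def using Wp_eval[OF that(1), of B m] by (simp add: m_def)
  qed
  have wQ: "poly2 W' a t = a ^ m' * (t ^ n' * evp h a t Q)" if "a \<noteq> 0" "t \<noteq> 0" for a t
  proof -
    have "t ^ n' * evp h a t Q = poly2 A' a t + poly2 B' (poly h t / a) t"
      using evp_jc[OF that nf2(2)] by (simp add: rhom_add[OF rhom_evp] rhom_mult[OF rhom_evp]
          rhom_pow[OF rhom_evp] evp_simps evp_embA evp_embB)
    then show ?thesis unfolding W'_def using Wp_eval[OF that(1), of B' m'] by (simp add: m'_def)
  qed
  define C where "C = x ^ (n + n') * Rp"
  have C0: "C \<noteq> 0" using Rp by (simp add: C_def x_def)
  have key: "W * (W' * [:x ^ N0:]) = monom C (m + m')"
  proof -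
    have "W * (W' * [:x ^ N0:]) - monom C (m + m') = 0"
    proof (rule poly2_zero)
      fix a t :: 'a assume a: "a \<noteq> 0" and t: "t \<noteq> 0"
      have "poly2 (W * (W' * [:x ^ N0:])) a t = poly2 W a t * (poly2 W' a t * t ^ N0)"
        unfolding poly2_mult poly2_const by (simp add: x_def poly_power)
      also have "\<dots> = a ^ (m + m') * t ^ (n + n') * (t ^ N0 * (evp h a t P * evp h a t Q))"
        using wP[OF a t] wQ[OF a t] by (simp add: power_add ac_simps)
      also have "\<dots> = poly2 (monom C (m + m')) a t"
        using hyp[OF a t] by (simp add: poly2_monom C_def x_def poly_power ac_simps)
      finally show "poly2 (W * (W' * [:x ^ N0:]) - monom C (m + m')) a t = 0"
        by (simp add: rhom_diff[OF rhom_poly2])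
    qed
    then show ?thesis by simp
  qed
  obtain e1 where e1: "W = monom (coeff W e1) e1" "coeff W e1 \<noteq> 0"
    using mono_factor[OF key C0] by blast
  have key': "W' * (W * [:x ^ N0:]) = monom C (m + m')" using key by (simp add: ac_simps)
  obtain e2 where e2: "W' = monom (coeff W' e2) e2" "coeff W' e2 \<noteq> 0"
    using mono_factor[OF key' C0] by blast
  define C1 where "C1 = coeff W e1"
  define C2 where "C2 = coeff W' e2"
  have "monom (C1 * C2 * x ^ N0) (e1 + e2) = monom C (m + m')"
    using key unfolding C1_def C2_def
    by (subst (asm) e1(1), subst (asm) e2(1)) (simp add: mult_monom monom_0[symmetric] mult.assoc del: monom_0)
  then have eqs: "C1 * C2 * x ^ N0 = C" "e1 + e2 = m + m'"
    using C0 by (simp_all add: monom_eq_iff') (metis mult_eq_0_iff power_eq_0_iff)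
  have C1dvd: "C1 dvd C" using eqs(1) by (metis dvd_triv_left mult.assoc)
  have C2dvd: "C2 dvd C" using eqs(1) by (metis dvd_triv_left mult.assoc mult.commute)
  show ?thesis
  proof (cases "e1 < m \<or> e2 < m'")
    case True
    then have "h dvd C"
    proof
      assume "e1 < m"
      then have "C1 = coeff B (m - e1) * h ^ (m - e1)" unfolding C1_def W_def by (simp add: Wp_coeff)
      moreover have "h dvd h ^ (m - e1)" using \<open>e1 < m\<close> by (simp add: dvd_power)
      ultimately have "h dvd C1" by simp
      then show "h dvd C" using C1dvd by (rule dvd_trans)
    next
      assume "e2 < m'"
      then have "C2 = coeff B' (m' - e2) * h ^ (m' - e2)" unfolding C2_def W'_def by (simp add: Wp_coeff)
      moreover have "h dvd h ^ (m' - e2)" using \<open>e2 < m'\<close> by (simp add: dvd_power)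
      ultimately have "h dvd C2" by simp
      then show "h dvd C" using C2dvd by (rule dvd_trans)
    qed
    then show ?thesis unfolding C_def x_def by blast
  next
    case False
    then have em: "e1 = m" "e2 = m'" using eqs(2) by auto
    have "evp h a t P = poly C1 t / t ^ n \<and> evp h a t Q = poly C2 t / t ^ n'" if a: "a \<noteq> 0" and t: "t \<noteq> 0" for a t
    proof -
      have "poly C1 t * a ^ m = a ^ m * (t ^ n * evp h a t P)"
        using wP[OF a t] e1(1) em unfolding C1_def by (metis poly2_monom)
      moreover have "poly C2 t * a ^ m' = a ^ m' * (t ^ n' * evp h a t Q)"
        using wQ[OF a t] e2(1) em unfolding C2_def by (metis poly2_monom)
      ultimately show ?thesis using a t by (simp add: field_simps)
    qed
    moreover have "C1 \<noteq> 0" "C2 \<noteq> 0" using e1(2) e2(2) by (simp_all add: C1_def C2_def)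
    ultimately show ?thesis using eqs(1) unfolding C_def x_def by blast
  qed
qed



lemma Phi_hom:
  fixes f g :: "'a::field poly"
  assumes phi: "phi \<in> ring_hom (A_alg f) (A_alg g)"
    and k: "\<And>c. phi (cls f (const4 c)) = cls g (const4 c)"
    and a: "a \<noteq> 0" and t: "t \<noteq> 0"
  shows "Phi g (phi (cls f P)) a t = sub4 (\<lambda>x. x) (Phi g (phi (cls f X1)) a t) (Phi g (phi (cls f X2)) a t)
     (Phi g (phi (cls f Zv)) a t) (Phi g (phi (cls f Yv)) a t) P"
proof (induct P rule: mpoly4_induct)
  case (1 c) then show ?case using a t by (simp add: k Phi_cls sub4_simps[OF rhom_id] evp_simps)
next
  case (6 P R)
  have "phi (cls f (P + R)) = phi (cls f P) \<oplus>\<^bsub>A_alg g\<^esub> phi (cls f R)"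
    using ring_hom_add[OF phi, of "cls f P" "cls f R"] by (simp add: A_alg_add A_alg_carrier)
  then show ?case using 6 Phi_add[OF ring_hom_closed[OF phi] ring_hom_closed[OF phi] a t]
    by (simp add: A_alg_carrier rhom_add[OF rhom_sub4[OF rhom_id]])
next
  case (7 P R)
  have "phi (cls f (P * R)) = phi (cls f P) \<otimes>\<^bsub>A_alg g\<^esub> phi (cls f R)"
    using ring_hom_mult[OF phi, of "cls f P" "cls f R"] by (simp add: A_alg_mult A_alg_carrier)
  then show ?case using 7 Phi_mult[OF ring_hom_closed[OF phi] ring_hom_closed[OF phi] a t]
    by (simp add: A_alg_carrier rhom_mult[OF rhom_sub4[OF rhom_id]])
qed (simp_all add: sub4_simps[OF rhom_id])

lemma units_form:
  fixes h :: "'a::field_char_0 poly"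
  assumes h1: "degree h \<ge> 1" and h0: "coeff h 0 \<noteq> 0"
    and X: "X \<in> carrier (A_alg h)" and Y: "Y \<in> carrier (A_alg h)"
    and XY: "X \<otimes>\<^bsub>A_alg h\<^esub> Y = \<one>\<^bsub>A_alg h\<^esub>"
  shows "\<exists>c k. c \<noteq> 0 \<and> (\<forall>a t. a \<noteq> 0 \<longrightarrow> t \<noteq> 0 \<longrightarrow> Phi h X a t = c * t powi k)"
proof -
  have hnz: "h \<noteq> 0" using h0 by auto
  obtain P Q where PQ: "X = cls h P" "Y = cls h Q" using X Y by (auto simp: A_alg_carrier)
  have hyp: "t ^ 0 * (evp h a t P * evp h a t Q) = poly 1 t" if "a \<noteq> 0" "t \<noteq> 0" for a t
    using Phi_mult[OF X Y that] XY Phi_one[OF that] by (simp add: PQ Phi_cls[OF that])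
  note ma = mono_analysis[OF hnz one_neq_zero hyp]
  have "\<not> h dvd [:0, 1:] ^ N * 1" for N
  proof
    assume "h dvd [:0, 1:] ^ N * 1"
    then have "h dvd 1" by (rule dvd_cancel_X[OF h0])
    then obtain c where "h = [:c:]" by (auto simp: is_unit_poly_iff)
    then show False using h1 by simp
  qed
  then obtain C1 C2 n1 n2 where C: "C1 \<noteq> 0" "C1 * C2 * [:0, 1:] ^ 0 = [:0, 1:] ^ (n1 + n2) * 1"
    "\<forall>a t. a \<noteq> 0 \<longrightarrow> t \<noteq> 0 \<longrightarrow> evp h a t P = poly C1 t / t ^ n1"
    using ma by blast
  have "C1 dvd [:0, 1:] ^ (n1 + n2)" using C(2) by (metis dvd_triv_left mult.right_neutral power_0)
  then obtain c j where cj: "c \<noteq> 0" "C1 = monom c j" using dvd_X_pow C(1) by blast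
  have "Phi h X a t = c * t powi (int j - int n1)" if "a \<noteq> 0" "t \<noteq> 0" for a t
    using C(3) that by (simp add: PQ Phi_cls cj poly_monom power_int_diff)
  then show ?thesis using cj(1) by blast
qed

lemma two_powi:
  assumes "(2::'a::field_char_0) powi j = 1"
  shows "j = 0"
proof (cases "j \<ge> 0")
  case True
  then obtain n where n: "j = int n" by (metis nonneg_int_cases)
  then have "(2::'a) ^ n = 1" using assms by simp
  then have "of_nat (2 ^ n) = (of_nat 1 :: 'a)" by simp
  then have "(2::nat) ^ n = 1" by (rule of_nat_eq_iff[THEN iffD1])
  then show ?thesis using n by simp
next
  case False
  then obtain n where n: "j = - int n" by (metis nle_le nonpos_int_cases)
  then have "inverse ((2::'a) ^ n) = 1" using assms by (simp add: power_int_minus)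
  then have "(2::'a) ^ n = 1" by (metis inverse_1 inverse_inverse_eq)
  then have "of_nat (2 ^ n) = (of_nat 1 :: 'a)" by simp
  then have "(2::nat) ^ n = 1" by (rule of_nat_eq_iff[THEN iffD1])
  then show ?thesis using n False by simp
qed

lemma powi_identity:
  fixes c c' :: "'a::field_char_0"
  assumes c: "c \<noteq> 0" and c': "c' \<noteq> 0"
    and hyp: "\<And>t. t \<noteq> 0 \<Longrightarrow> c * (c' * t powi k') powi k = t"
  shows "k * k' = 1"
proof -
  have e: "c * c' powi k * t powi (k' * k) = t" if "t \<noteq> 0" for t
    using hyp[OF that] by (simp add: power_int_mult_distrib power_int_mult[symmetric] mult.assoc)
  have e1: "c * c' powi k = 1" using e[of 1] by simp
  have "t powi (k' * k) = t" if "t \<noteq> 0" for t :: 'a using e[OF that] e1 by simp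
  then have "(2::'a) powi (k' * k) = 2 powi 1" by simp
  then have "(2::'a) powi (k' * k - 1) = 1" by (simp add: power_int_diff)
  then have "k' * k - 1 = 0" by (rule two_powi)
  then show ?thesis by (simp add: mult.commute)
qed



lemma powi_cases_eval:
  fixes t :: "'a::field"
  assumes "t \<noteq> 0"
  shows "(if 0 \<le> k then t ^ nat k else (1 / t) ^ nat (- k)) = t powi k"
proof (cases "0 \<le> k")
  case True then show ?thesis by (simp add: power_int_def)
next
  case False then show ?thesis by (simp add: power_int_def power_one_over power_inverse divide_inverse)
qed

definition ymon :: "int \<Rightarrow> 'a::comm_ring_1 mpoly4" where
  "ymon k = (if 0 \<le> k then Yv ^ nat k else Zv ^ nat (- k))"

lemma sub4_ymon: "sub4 (\<lambda>x. x) e1 e2 e3 e4 (ymon k) = (if 0 \<le> k then e4 ^ nat k else e3 ^ nat (- k))"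
  by (simp add: ymon_def rhom_pow[OF rhom_sub4[OF rhom_id]] sub4_simps[OF rhom_id])

lemma dvd_same_degree:
  fixes g R :: "'a::field poly"
  assumes "g dvd R" "R \<noteq> 0" "degree R = degree g"
  shows "\<exists>l. l \<noteq> 0 \<and> R = smult l g"
proof -
  obtain q where q: "R = g * q" using assms(1) by (auto elim: dvdE)
  have "g \<noteq> 0" "q \<noteq> 0" using q assms(2) by auto
  then have "degree q = 0" using q assms(3) degree_mult_eq[of g q] by simp
  then obtain l where "q = [:l:]" by (metis degree_0_id)
  then show ?thesis using q \<open>q \<noteq> 0\<close> by (intro exI[of _ l]) auto
qed

lemma only_if:
  fixes f g :: "'a::field_char_0 poly"
  assumes s: "s \<ge> 1" and df: "degree f = s" and dg: "degree g = s"
    and f0: "coeff f 0 \<noteq> 0" and g0: "coeff g 0 \<noteq> 0"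
    and iso: "A_kalg_iso f g"
  shows "\<exists>lam c. lam \<noteq> 0 \<and> c \<noteq> 0 \<and>
       ((\<forall>y. poly g y = lam * poly f (c * y)) \<or>
        (\<forall>y. y \<noteq> 0 \<longrightarrow> poly g y = lam * y ^ s * poly f (c / y)))"
proof -
  have fnz: "f \<noteq> 0" and gnz: "g \<noteq> 0" using f0 g0 by auto
  obtain phi where phi: "phi \<in> ring_iso (A_alg f) (A_alg g)"
    and kc: "\<And>c. phi (A_ideal f +>\<^bsub>tc_ring\<^esub> const4 c) = A_ideal g +>\<^bsub>tc_ring\<^esub> const4 c"
    using iso unfolding A_kalg_iso_def by blast
  have k1: "phi (cls f (const4 c)) = cls g (const4 c)" for c using kc by (simp add: cls_def)
  have hom: "phi \<in> ring_hom (A_alg f) (A_alg g)" using phi by (simp add: ring_iso_def)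
  have bij: "bij_betw phi (carrier (A_alg f)) (carrier (A_alg g))" using phi by (simp add: ring_iso_def)
  have ringf: "ring (A_alg f)" using A_alg_cring cring.axioms(1) by blast
  define psi where "psi = inv_into (carrier (A_alg f)) phi"
  have psi: "psi \<in> ring_iso (A_alg g) (A_alg f)" unfolding psi_def by (rule ring_iso_set_sym[OF ringf phi])
  have hom': "psi \<in> ring_hom (A_alg g) (A_alg f)" using psi by (simp add: ring_iso_def)
  have inj: "inj_on phi (carrier (A_alg f))" using bij by (rule bij_betw_imp_inj_on)
  have surj: "phi ` carrier (A_alg f) = carrier (A_alg g)" using bij by (rule bij_betw_imp_surj_on)
  have psiphi: "psi (phi x) = x" if "x \<in> carrier (A_alg f)" for x
    unfolding psi_def using inj that by simp
  have k2: "psi (cls g (const4 c)) = cls f (const4 c)" for c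
    using psiphi[of "cls f (const4 c)"] k1[of c] by (simp add: A_alg_carrier)
  have clsin: "cls h P \<in> carrier (A_alg h)" for h P by (simp add: A_alg_carrier)
  define E where "E G a t = Phi g (phi (cls f G)) a t" for G a t
  define F where "F G a t = Phi f (psi (cls g G)) a t" for G a t
  have Ef: "Phi g (phi (cls f P)) a t = sub4 (\<lambda>x. x) (E X1 a t) (E X2 a t) (E Zv a t) (E Yv a t) P"
    if "a \<noteq> 0" "t \<noteq> 0" for P a t
    unfolding E_def by (rule Phi_hom[OF hom k1 that])
  have Ff: "Phi f (psi (cls g P)) a t = sub4 (\<lambda>x. x) (F X1 a t) (F X2 a t) (F Zv a t) (F Yv a t) P"
    if "a \<noteq> 0" "t \<noteq> 0" for P a t
    unfolding F_def by (rule Phi_hom[OF hom' k2 that])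
  have clsYZ: "\<And>h. cls h (Yv * Zv) = cls h 1" by (simp add: cls_eq J_gen2)
  have unitf: "cls f Yv \<otimes>\<^bsub>A_alg f\<^esub> cls f Zv = \<one>\<^bsub>A_alg f\<^esub>"
    using clsYZ[of f] by (simp add: A_alg_mult A_alg_one)
  have unitg: "cls g Yv \<otimes>\<^bsub>A_alg g\<^esub> cls g Zv = \<one>\<^bsub>A_alg g\<^esub>"
    using clsYZ[of g] by (simp add: A_alg_mult A_alg_one)
  have uv: "phi (cls f Yv) \<otimes>\<^bsub>A_alg g\<^esub> phi (cls f Zv) = \<one>\<^bsub>A_alg g\<^esub>"
    using ring_hom_mult[OF hom clsin[of f Yv] clsin[of f Zv]] unitf ring_hom_one[OF hom] by simp
  have uv': "psi (cls g Yv) \<otimes>\<^bsub>A_alg f\<^esub> psi (cls g Zv) = \<one>\<^bsub>A_alg f\<^esub>"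
    using ring_hom_mult[OF hom' clsin[of g Yv] clsin[of g Zv]] unitg ring_hom_one[OF hom'] by simp
  have s1: "degree f \<ge> 1" "degree g \<ge> 1" using s df dg by auto
  obtain c k where ck: "c \<noteq> 0" "\<And>a t. a \<noteq> 0 \<Longrightarrow> t \<noteq> 0 \<Longrightarrow> E Yv a t = c * t powi k"
    using units_form[OF s1(2) g0 ring_hom_closed[OF hom clsin[of f Yv]] ring_hom_closed[OF hom clsin[of f Zv]] uv]
    unfolding E_def by blast
  obtain c' k' where ck': "c' \<noteq> 0" "\<And>a t. a \<noteq> 0 \<Longrightarrow> t \<noteq> 0 \<Longrightarrow> F Yv a t = c' * t powi k'"
    using units_form[OF s1(1) f0 ring_hom_closed[OF hom' clsin[of g Yv]] ring_hom_closed[OF hom' clsin[of g Zv]] uv']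
    unfolding F_def by blast
  have EZ: "E Zv a t = 1 / E Yv a t" if "a \<noteq> 0" "t \<noteq> 0" for a t
  proof -
    have "E Yv a t * E Zv a t = 1"
      using Phi_mult[OF ring_hom_closed[OF hom clsin[of f Yv]] ring_hom_closed[OF hom clsin[of f Zv]] that] uv
        Phi_one[OF that, of g] unfolding E_def by simp
    then show ?thesis by (metis inverse_unique inverse_eq_divide)
  qed
  have FZ: "F Zv a t = 1 / F Yv a t" if "a \<noteq> 0" "t \<noteq> 0" for a t
  proof -
    have "F Yv a t * F Zv a t = 1"
      using Phi_mult[OF ring_hom_closed[OF hom' clsin[of g Yv]] ring_hom_closed[OF hom' clsin[of g Zv]] that] uv'
        Phi_one[OF that, of f] unfolding F_def by simp
    then show ?thesis by (metis inverse_unique inverse_eq_divide)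
  qed
  have u_eq: "phi (cls f Yv) = cls g (const4 c * ymon k)"
  proof (rule Phi_inj[OF gnz ring_hom_closed[OF hom clsin[of f Yv]] clsin[of g "const4 c * ymon k"]])
    fix a t :: 'a assume a: "a \<noteq> 0" and t: "t \<noteq> 0"
    have "Phi g (cls g (const4 c * ymon k)) a t = c * (if 0 \<le> k then t ^ nat k else (1 / t) ^ nat (- k))"
      using a t by (simp add: Phi_cls rhom_mult[OF rhom_evp] evp_simps) (simp add: evp_def sub4_ymon)
    also have "\<dots> = c * t powi k" using t by (simp add: powi_cases_eval)
    finally show "Phi g (phi (cls f Yv)) a t = Phi g (cls g (const4 c * ymon k)) a t"
      using ck(2)[OF a t] unfolding E_def by simp
  qed
  have "c * (c' * t powi k') powi k = t" if t: "t \<noteq> 0" for t :: 'a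
  proof -
    have one: "(1::'a) \<noteq> 0" by simp
    have "t = Phi f (cls f Yv) 1 t" using t by (simp add: Phi_cls evp_simps)
    also have "\<dots> = Phi f (psi (cls g (const4 c * ymon k))) 1 t"
      using psiphi[OF clsin[of f Yv]] u_eq by simp
    also have "\<dots> = c * (if 0 \<le> k then F Yv 1 t ^ nat k else F Zv 1 t ^ nat (- k))"
      unfolding Ff[OF one t] by (simp add: rhom_mult[OF rhom_sub4[OF rhom_id]] sub4_simps[OF rhom_id] sub4_ymon)
    also have "\<dots> = c * (if 0 \<le> k then F Yv 1 t ^ nat k else (1 / F Yv 1 t) ^ nat (- k))"
      using FZ[OF one t] by simp
    also have "\<dots> = c * F Yv 1 t powi k"
      using ck'(1) t by (simp add: powi_cases_eval ck'(2)[OF one t])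
    finally show ?thesis using ck'(2)[OF one t] by simp
  qed
  then have "k * k' = 1" by (rule powi_identity[OF ck(1) ck'(1)])
  then have kpm: "k = 1 \<or> k = -1" by (rule pos_zmult_eq_1_iff_lemma)
  obtain P1 where P1: "phi (cls f X1) = cls g P1"
    using ring_hom_closed[OF hom clsin[of f X1]] by (auto simp: A_alg_carrier)
  obtain P2 where P2: "phi (cls f X2) = cls g P2"
    using ring_hom_closed[OF hom clsin[of f X2]] by (auto simp: A_alg_carrier)
  have EP1: "E X1 a t = evp g a t P1" if "a \<noteq> 0" "t \<noteq> 0" for a t
    unfolding E_def P1 using that by (simp add: Phi_cls)
  have EP2: "E X2 a t = evp g a t P2" if "a \<noteq> 0" "t \<noteq> 0" for a t
    unfolding E_def P2 using that by (simp add: Phi_cls)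
  have Eprod: "E X1 a t * E X2 a t = poly f (c * t powi k)" if at: "a \<noteq> 0" "t \<noteq> 0" for a t
  proof -
    have "cls f (X1 * X2) = cls f (hY f)" by (simp add: cls_eq J_gen1)
    then have "Phi g (phi (cls f (X1 * X2))) a t = Phi g (phi (cls f (hY f))) a t" by simp
    then show ?thesis unfolding Ef[OF at]
      by (simp add: rhom_mult[OF rhom_sub4[OF rhom_id]] sub4_simps[OF rhom_id] ev1_id ck(2)[OF at])
  qed
  have core: "g dvd Rp" if Rp: "Rp \<noteq> 0" and hyp: "\<And>t. t \<noteq> 0 \<Longrightarrow> t ^ N0 * poly f (c * t powi k) = poly Rp t"
    for Rp N0
  proof -
    have h2: "t ^ N0 * (evp g a t P1 * evp g a t P2) = poly Rp t" if "a \<noteq> 0" "t \<noteq> 0" for a t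
      using EP1[OF that] EP2[OF that] Eprod[OF that] hyp[OF that(2)] by simp
    from mono_analysis[OF gnz Rp h2] consider (d) N where "g dvd [:0, 1:] ^ N * Rp"
      | (i) C1 C2 n1 n2 where "\<forall>a t. a \<noteq> 0 \<longrightarrow> t \<noteq> 0 \<longrightarrow> evp g a t P1 = poly C1 t / t ^ n1 \<and> evp g a t P2 = poly C2 t / t ^ n2"
      by blast
    then show ?thesis
    proof cases
      case d then show ?thesis by (rule dvd_cancel_X[OF g0])
    next
      case i
      have one: "(1::'a) \<noteq> 0" and two: "(2::'a) \<noteq> 0" by simp_all
      have indep: "Phi g (phi (cls f P)) 1 t = Phi g (phi (cls f P)) 2 t" if t: "t \<noteq> 0" for P t
      proof -
        have "E X1 1 t = E X1 2 t" using i EP1[OF one t] EP1[OF two t] t by simp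
        moreover have "E X2 1 t = E X2 2 t" using i EP2[OF one t] EP2[OF two t] t by simp
        moreover have "E Yv 1 t = E Yv 2 t" using ck(2)[OF one t] ck(2)[OF two t] by simp
        moreover have "E Zv 1 t = E Zv 2 t" using EZ[OF one t] EZ[OF two t] ck(2)[OF one t] ck(2)[OF two t] by simp
        ultimately show ?thesis using Ef[OF one t] Ef[OF two t] by simp
      qed
      obtain x where x: "x \<in> carrier (A_alg f)" "phi x = cls g X1"
        using surj clsin[of g X1] by (metis imageE)
      obtain P where "x = cls f P" using x by (auto simp: A_alg_carrier)
      then have "Phi g (cls g X1) 1 1 = Phi g (cls g X1) 2 1" using indep[of 1 P] x by simp
      then show ?thesis by (simp add: Phi_cls evp_simps)
    qed
  qed
  from kpm show ?thesis
  proof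
    assume k: "k = 1"
    define Rp where "Rp = pcompose f [:0, c:]"
    have dR: "degree Rp = s" using df ck(1) by (simp add: Rp_def degree_pcompose)
    have R0: "Rp \<noteq> 0" using dR s by auto
    have "g dvd Rp" by (rule core[OF R0, of 0]) (simp add: k Rp_def poly_pcompose mult.commute)
    moreover have "degree Rp = degree g" using dR dg by simp
    ultimately obtain l where l: "l \<noteq> 0" "Rp = smult l g" using dvd_same_degree[OF _ R0] by blast
    have "poly g y = (1/l) * poly f (c * y)" for y
      using arg_cong[OF l(2), of "\<lambda>p. poly p y"] l(1) by (simp add: Rp_def poly_pcompose field_simps)
    then show ?thesis using l(1) ck(1) by (intro exI[of _ "1/l"] exI[of _ c]) simp
  next
    assume k: "k = -1"
    define Q where "Q = pcompose f [:0, c:]"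
    define Rp where "Rp = reflect_poly Q"
    have dQ: "degree Q = s" using df ck(1) by (simp add: Q_def degree_pcompose)
    have Q0: "coeff Q 0 \<noteq> 0" using f0 by (simp add: Q_def poly_0_coeff_0[symmetric] poly_pcompose)
    have dR: "degree Rp = s" using dQ Q0 by (simp add: Rp_def)
    have R0: "Rp \<noteq> 0" using Q0 by (auto simp: Rp_def)
    have pR: "poly Rp y = y ^ s * poly f (c / y)" if "y \<noteq> 0" for y
    proof -
      have "poly Rp y = y ^ degree Q * poly Q (1 / y)" using that by (simp add: Rp_def poly_reflect_poly_nz divide_inverse)
      then show ?thesis unfolding dQ by (simp add: Q_def poly_pcompose divide_inverse mult.commute)
    qed
    have "g dvd Rp"
    proof (rule core[OF R0, of s])
      fix t :: 'a assume t: "t \<noteq> 0"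
      show "t ^ s * poly f (c * t powi k) = poly Rp t"
        using t by (simp add: k pR power_int_minus divide_inverse)
    qed
    moreover have "degree Rp = degree g" using dR dg by simp
    ultimately obtain l where l: "l \<noteq> 0" "Rp = smult l g" using dvd_same_degree[OF _ R0] by blast
    have "poly g y = (1/l) * y ^ s * poly f (c / y)" if "y \<noteq> 0" for y
      using arg_cong[OF l(2), of "\<lambda>p. poly p y"] l(1) pR[OF that] by (simp add: field_simps)
    then show ?thesis using l(1) ck(1) by (intro exI[of _ "1/l"] exI[of _ c]) simp
  qed
qed


theorem proposition3p2:
  fixes f g :: "'a::field_char_0 poly" and s :: nat
  assumes "alg_closed_field TYPE('a)"
    and "s \<ge> 1"
    and "degree f = s" and "degree g = s"
    and "coeff f 0 \<noteq> 0" and "coeff g 0 \<noteq> 0"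
  shows "A_kalg_iso f g \<longleftrightarrow>
    (\<exists>lam c. lam \<noteq> 0 \<and> c \<noteq> 0 \<and>
       ((\<forall>y. poly g y = lam * poly f (c * y)) \<or>
        (\<forall>y. y \<noteq> 0 \<longrightarrow> poly g y = lam * y ^ s * poly f (c / y))))"
proof
  assume "A_kalg_iso f g"
  then show "\<exists>lam c. lam \<noteq> 0 \<and> c \<noteq> 0 \<and>
       ((\<forall>y. poly g y = lam * poly f (c * y)) \<or>
        (\<forall>y. y \<noteq> 0 \<longrightarrow> poly g y = lam * y ^ s * poly f (c / y)))"
    using only_if[OF assms(2-6)] by blast
next
  assume "\<exists>lam c. lam \<noteq> 0 \<and> c \<noteq> 0 \<and>
       ((\<forall>y. poly g y = lam * poly f (c * y)) \<or>
        (\<forall>y. y \<noteq> 0 \<longrightarrow> poly g y = lam * y ^ s * poly f (c / y)))"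
  then obtain lam c where lc: "lam \<noteq> 0" "c \<noteq> 0"
    and h: "(\<forall>y. poly g y = lam * poly f (c * y)) \<or>
        (\<forall>y. y \<noteq> 0 \<longrightarrow> poly g y = lam * y ^ s * poly f (c / y))" by blast
  have fnz: "f \<noteq> 0" and gnz: "g \<noteq> 0" using assms(5,6) by auto
  from h show "A_kalg_iso f g"
  proof
    assume "\<forall>y. poly g y = lam * poly f (c * y)"
    then show ?thesis using if_case1[OF fnz gnz lc] by blast
  next
    assume "\<forall>y. y \<noteq> 0 \<longrightarrow> poly g y = lam * y ^ s * poly f (c / y)"
    then show ?thesis using if_case2[OF fnz gnz lc] by blast
  qed
qed

end
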